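(* Let $L$ be a lattice diagram with $n$ cells, and let $k\ge1$ be an integer. Write the complement $\overline L=(\mathbb{N}\times\mathbb{N})\setminus L$ as $\{(\overline p_1,\overline q_1),(\overline p_2,\overline q_2),\dots\}$, ordered increasingly in the order described below. Then $$h_k(\partial X)\,\Delta_L(X,Y)=\sum_{1\le i_1<i_2<\dots<i_k}\epsilon\big(L,h_k(i_1,\dots,i_k;L)\big)\,\Delta_{h_k(i_1,\dots,i_k;L)}(X,Y).$$ Here $h_k(i_1,\dots,i_k;L)$ is the lattice diagram whose complement is obtained from $\overline L$ by replacing $(\overline p_{i_1},\overline q_{i_1}),\dots,(\overline p_{i_k},\overline q_{i_k})$ by $(\overline p_{i_1}+1,\overline q_{i_1}),\dots,(\overline p_{i_k}+1,\overline q_{i_k})$ and keeping the others unchanged; terms for which this does not produce the complement of an $n$-cell diagram are zero. The coefficient $\epsilon(L,h_k(i_1,\dots,i_k;L))$ is a positive integer, given by $\epsilon(L,L')=\prod_{t=1}^n p_t!\,q_t!\big/\prod_{t=1}^n p'_t!\,q'_t!$, where $(p_t,q_t)$ and $(p'_t,q'_t)$ are the cells of $L$ and $L'$ respectively.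
   Context: A lattice diagram is a finite subset of $\mathbb{N}\times\mathbb{N}$. Cells are ordered by $(p,q)<(p',q')$ iff $q<q'$, or $q=q'$ and $p<p'$. For a lattice diagram $L$ with cells $(p_1,q_1)<\dots<(p_n,q_n)$, set $\Delta_L(X,Y)=\det(x_r^{p_t}y_r^{q_t})_{1\le r,t\le n}$, with $X=(x_1,\dots,x_n)$ and $Y=(y_1,\dots,y_n)$. The function $h_k$ is the $k$-th complete homogeneous symmetric function, and $h_k(\partial X)$ is obtained from it by substituting $\partial/\partial x_r$ for $x_r$. *)

theory Defs
  imports "HOL-Library.Poly_Mapping" "HOL-Library.FuncSet" "HOL-Library.Product_Lexorder" "Jordan_Normal_Form.Determinant"
begin

text \<open>Polynomials in the variables x_r (encoded Inl r) and y_r (encoded Inr r),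
  with rational coefficients: finitely supported maps from monomials
  (finitely supported exponent vectors) to coefficients.\<close>

type_synonym mpoly = "((nat + nat) \<Rightarrow>\<^sub>0 nat) \<Rightarrow>\<^sub>0 rat"

definition Xv :: "nat \<Rightarrow> mpoly" where
  "Xv r = Poly_Mapping.single (Poly_Mapping.single (Inl r) 1) 1"

definition Yv :: "nat \<Rightarrow> mpoly" where
  "Yv r = Poly_Mapping.single (Poly_Mapping.single (Inr r) 1) 1"

definition const_poly :: "rat \<Rightarrow> mpoly" where
  "const_poly c = Poly_Mapping.single 0 c"

definition pdiff :: "(nat + nat) \<Rightarrow> mpoly \<Rightarrow> mpoly" where
  "pdiff v P = (\<Sum>e\<in>Poly_Mapping.keys P.
      Poly_Mapping.single (e - Poly_Mapping.single v 1) (of_nat (Poly_Mapping.lookup e v) * Poly_Mapping.lookup P e))"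

fun dx_all :: "(nat \<Rightarrow> nat) \<Rightarrow> nat \<Rightarrow> mpoly \<Rightarrow> mpoly" where
  "dx_all m 0 P = P"
| "dx_all m (Suc r) P = (pdiff (Inl r) ^^ m r) (dx_all m r P)"

definition hk_diff :: "nat \<Rightarrow> nat \<Rightarrow> mpoly \<Rightarrow> mpoly" where
  "hk_diff n k P = (\<Sum>m\<in>{m \<in> {..<n} \<rightarrow>\<^sub>E {..k}. sum m {..<n} = k}. dx_all m n P)"

text \<open>Cells of a lattice diagram, listed increasingly: (p,q) < (p',q') iff
  q < q', or q = q' and p < p'.\<close>
definition cells :: "(nat \<times> nat) set \<Rightarrow> (nat \<times> nat) list" where
  "cells L = map (\<lambda>(q, p). (p, q)) (sorted_list_of_set ((\<lambda>(p, q). (q, p)) ` L))"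

definition Delta :: "(nat \<times> nat) set \<Rightarrow> mpoly" where
  "Delta L = det (mat (card L) (card L)
      (\<lambda>(r, t). Xv r ^ fst (cells L ! t) * Yv r ^ snd (cells L ! t)))"

definition hk_diag :: "(nat \<times> nat) set \<Rightarrow> (nat \<times> nat) set \<Rightarrow> (nat \<times> nat) set" where
  "hk_diag L R = - ((- L - R) \<union> (\<lambda>(p, q). (p + 1, q)) ` R)"

definition epsilon :: "(nat \<times> nat) set \<Rightarrow> (nat \<times> nat) set \<Rightarrow> rat" where
  "epsilon L L' = of_nat (\<Prod>(p, q)\<in>L. fact p * fact q) / of_nat (\<Prod>(p, q)\<in>L'. fact p * fact q)"

text \<open>Index sets R of k complement cells for which the replacement gives the
  complement of an n-cell diagram (the other terms are zero).\<close>
definition valid_sets :: "(nat \<times> nat) set \<Rightarrow> nat \<Rightarrow> (nat \<times> nat) set set" where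
  "valid_sets L k = {R. R \<subseteq> - L \<and> finite R \<and> card R = k \<and>
      finite (hk_diag L R) \<and> card (hk_diag L R) = card L}"

end

theory Submission
  imports Defs
begin


definition ff :: "nat \<Rightarrow> nat \<Rightarrow> nat" where
  "ff a j = (\<Prod>i<j. a - i)"

lemma ff_Suc: "ff a (Suc j) = ff a j * (a - j)"
  by (simp add: ff_def)

lemma ff_zero: "a < j \<Longrightarrow> ff a j = 0"
  unfolding ff_def by (rule prod_zero) auto

lemma ff_fact: "j \<le> a \<Longrightarrow> ff a j * fact (a - j) = (fact a :: nat)"
proof (induction j)
  case 0 then show ?case by (simp add: ff_def)
next
  case (Suc j)
  have e: "a - j = Suc (a - Suc j)" using Suc.prems by simp
  have f: "fact (a - j) = (a - j) * (fact (a - Suc j) :: nat)"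
    unfolding e by (simp only: fact_Suc of_nat_id)
  have "ff a (Suc j) * fact (a - Suc j) = ff a j * fact (a - j)"
    by (simp only: ff_Suc f mult.assoc)
  also have "\<dots> = fact a" using Suc by simp
  finally show ?case .
qed

lemma pdiff_alt:
  assumes "finite S" "Poly_Mapping.keys P \<subseteq> S"
  shows "pdiff v P = (\<Sum>e\<in>S. Poly_Mapping.single (e - Poly_Mapping.single v 1)
            (of_nat (Poly_Mapping.lookup e v) * Poly_Mapping.lookup P e))"
  unfolding pdiff_def
  by (rule sum.mono_neutral_left[OF assms(1) assms(2)]) (auto simp: in_keys_iff)

lemma pdiff_add: "pdiff v (P + Q) = pdiff v P + pdiff v Q"
proof -
  let ?S = "Poly_Mapping.keys P \<union> Poly_Mapping.keys Q"
  have f: "finite ?S" by simp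
  have "Poly_Mapping.keys (P + Q) \<subseteq> ?S" by (rule keys_add)
  then show ?thesis
    by (simp add: pdiff_alt[OF f] lookup_add distrib_left single_add sum.distrib)
qed

lemma pdiff_zero[simp]: "pdiff v 0 = 0"
  by (simp add: pdiff_def)

lemma pdiff_sum: "pdiff v (sum f A) = (\<Sum>a\<in>A. pdiff v (f a))"
  by (induction A rule: infinite_finite_induct) (auto simp: pdiff_add)

lemma pdiff_single: "pdiff v (Poly_Mapping.single e c) =
   Poly_Mapping.single (e - Poly_Mapping.single v 1) (of_nat (Poly_Mapping.lookup e v) * c)"
  by (subst pdiff_alt[of "{e}"]) auto

lemma pdiffp_sum: "(pdiff v ^^ j) (sum f A) = (\<Sum>a\<in>A. (pdiff v ^^ j) (f a))"
  by (induction j) (auto simp: pdiff_sum)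

lemma pdiffp_single: "(pdiff v ^^ j) (Poly_Mapping.single e c) =
   Poly_Mapping.single (e - Poly_Mapping.single v j) (c * of_nat (ff (Poly_Mapping.lookup e v) j))"
proof (induction j)
  case 0 then show ?case by (simp add: ff_def)
next
  case (Suc j)
  have l: "Poly_Mapping.lookup (e - Poly_Mapping.single v j) v = Poly_Mapping.lookup e v - j"
    by (simp add: lookup_minus)
  have "e - Poly_Mapping.single v j - Poly_Mapping.single v 1 = e - Poly_Mapping.single v (Suc j)"
    by (rule poly_mapping_eqI) (simp add: lookup_minus lookup_single when_def)
  note eq = this
  have "(pdiff v ^^ Suc j) (Poly_Mapping.single e c) = pdiff v ((pdiff v ^^ j) (Poly_Mapping.single e c))"
    by (simp only: funpow.simps comp_apply)
  also have "\<dots> = Poly_Mapping.single (e - Poly_Mapping.single v j - Poly_Mapping.single v 1)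
     (of_nat (Poly_Mapping.lookup (e - Poly_Mapping.single v j) v) * (c * of_nat (ff (Poly_Mapping.lookup e v) j)))"
    by (simp only: Suc.IH pdiff_single)
  also have "\<dots> = Poly_Mapping.single (e - Poly_Mapping.single v (Suc j)) (c * of_nat (ff (Poly_Mapping.lookup e v) (Suc j)))"
    by (simp only: eq l ff_Suc of_nat_mult mult_ac)
  finally show ?case .
qed

lemma dx_all_sum: "dx_all m r (sum f A) = (\<Sum>a\<in>A. dx_all m r (f a))"
  by (induction r) (auto simp: pdiffp_sum)

definition Dm :: "(nat \<Rightarrow> nat) \<Rightarrow> nat \<Rightarrow> (nat + nat) \<Rightarrow>\<^sub>0 nat" where
  "Dm m r = (\<Sum>i<r. Poly_Mapping.single (Inl i) (m i))"

lemma lookup_Dm: "Poly_Mapping.lookup (Dm m r) v = (case v of Inl i \<Rightarrow> if i < r then m i else 0 | Inr i \<Rightarrow> 0)"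
  unfolding Dm_def lookup_sum by (cases v) (auto simp: lookup_single when_def)

lemma dx_all_single: "dx_all m r (Poly_Mapping.single e c) =
   Poly_Mapping.single (e - Dm m r) (c * (\<Prod>i<r. of_nat (ff (Poly_Mapping.lookup e (Inl i)) (m i))))"
proof (induction r)
  case 0 then show ?case by (simp add: Dm_def)
next
  case (Suc r)
  have l: "Poly_Mapping.lookup (e - Dm m r) (Inl r) = Poly_Mapping.lookup e (Inl r)"
    by (simp add: lookup_minus lookup_Dm)
  have "e - Dm m r - Poly_Mapping.single (Inl r) (m r) = e - Dm m (Suc r)"
  proof (rule poly_mapping_eqI)
    fix v show "Poly_Mapping.lookup (e - Dm m r - Poly_Mapping.single (Inl r) (m r)) v = Poly_Mapping.lookup (e - Dm m (Suc r)) v"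
      by (cases v) (simp_all add: lookup_minus lookup_single lookup_Dm when_def)
  qed
  note eq = this
  have "dx_all m (Suc r) (Poly_Mapping.single e c) = (pdiff (Inl r) ^^ m r) (dx_all m r (Poly_Mapping.single e c))"
    by (simp only: dx_all.simps)
  also have "\<dots> = Poly_Mapping.single (e - Dm m r - Poly_Mapping.single (Inl r) (m r))
     (c * (\<Prod>i<r. of_nat (ff (Poly_Mapping.lookup e (Inl i)) (m i))) * of_nat (ff (Poly_Mapping.lookup (e - Dm m r) (Inl r)) (m r)))"
    by (simp only: Suc.IH pdiffp_single)
  also have "\<dots> = Poly_Mapping.single (e - Dm m (Suc r))
     (c * (\<Prod>i<Suc r. of_nat (ff (Poly_Mapping.lookup e (Inl i)) (m i))))"
    by (simp only: eq l prod.lessThan_Suc mult.assoc)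
  finally show ?case .
qed


lemma Xv_pow: "Xv r ^ a = Poly_Mapping.single (Poly_Mapping.single (Inl r) a) 1"
proof (induction a)
  case 0 then show ?case by simp
next
  case (Suc a)
  have "Xv r ^ Suc a = Xv r * Xv r ^ a" by simp
  also have "\<dots> = Poly_Mapping.single (Poly_Mapping.single (Inl r) (Suc a)) 1"
    unfolding Suc.IH by (simp add: Xv_def mult_single single_add[symmetric])
  finally show ?case .
qed

lemma Yv_pow: "Yv r ^ a = Poly_Mapping.single (Poly_Mapping.single (Inr r) a) 1"
proof (induction a)
  case 0 then show ?case by simp
next
  case (Suc a)
  have "Yv r ^ Suc a = Yv r * Yv r ^ a" by simp
  also have "\<dots> = Poly_Mapping.single (Poly_Mapping.single (Inr r) (Suc a)) 1"
    unfolding Suc.IH by (simp add: Yv_def mult_single single_add[symmetric])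
  finally show ?case .
qed

lemma prod_single: "(\<Prod>i\<in>A. Poly_Mapping.single (g i) (1::rat)) = (Poly_Mapping.single (\<Sum>i\<in>A. g i) 1 :: mpoly)"
  by (induction A rule: infinite_finite_induct) (auto simp: mult_single)

definition ex :: "nat \<Rightarrow> (nat \<Rightarrow> nat) \<Rightarrow> (nat \<Rightarrow> nat) \<Rightarrow> (nat + nat) \<Rightarrow>\<^sub>0 nat" where
  "ex n \<alpha> \<beta> = (\<Sum>i<n. Poly_Mapping.single (Inl i) (\<alpha> i) + Poly_Mapping.single (Inr i) (\<beta> i))"

lemma lookup_ex: "Poly_Mapping.lookup (ex n \<alpha> \<beta>) v =
   (case v of Inl i \<Rightarrow> if i < n then \<alpha> i else 0 | Inr i \<Rightarrow> if i < n then \<beta> i else 0)"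
  unfolding ex_def lookup_sum by (cases v) (auto simp: lookup_add lookup_single when_def)

lemma ex_eq_iff: "ex n \<alpha> \<beta> = ex n a b \<longleftrightarrow> (\<forall>i<n. \<alpha> i = a i \<and> \<beta> i = b i)"
proof
  assume e: "ex n \<alpha> \<beta> = ex n a b"
  show "\<forall>i<n. \<alpha> i = a i \<and> \<beta> i = b i"
  proof (intro allI impI)
    fix i assume i: "i < n"
    have "Poly_Mapping.lookup (ex n \<alpha> \<beta>) (Inl i) = Poly_Mapping.lookup (ex n a b) (Inl i)"
         "Poly_Mapping.lookup (ex n \<alpha> \<beta>) (Inr i) = Poly_Mapping.lookup (ex n a b) (Inr i)"
      using e by simp_all
    then show "\<alpha> i = a i \<and> \<beta> i = b i" using i by (simp add: lookup_ex)
  qed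
next
  assume h: "\<forall>i<n. \<alpha> i = a i \<and> \<beta> i = b i"
  show "ex n \<alpha> \<beta> = ex n a b"
  proof (rule poly_mapping_eqI)
    fix v show "Poly_Mapping.lookup (ex n \<alpha> \<beta>) v = Poly_Mapping.lookup (ex n a b) v"
      using h by (cases v) (auto simp: lookup_ex)
  qed
qed

lemma ex_not:
  assumes "e \<noteq> ex n (\<lambda>i. Poly_Mapping.lookup e (Inl i)) (\<lambda>i. Poly_Mapping.lookup e (Inr i))"
  shows "ex n \<alpha> \<beta> \<noteq> e"
proof
  assume h: "ex n \<alpha> \<beta> = e"
  have "e = ex n (\<lambda>i. Poly_Mapping.lookup e (Inl i)) (\<lambda>i. Poly_Mapping.lookup e (Inr i))"
  proof (rule poly_mapping_eqI)
    fix v show "Poly_Mapping.lookup e v = Poly_Mapping.lookup (ex n (\<lambda>i. Poly_Mapping.lookup e (Inl i)) (\<lambda>i. Poly_Mapping.lookup e (Inr i))) v"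
      unfolding h[symmetric] by (cases v) (auto simp: lookup_ex)
  qed
  with assms show False by simp
qed

lemma ex_minus_Dm: "ex n \<alpha> \<beta> - Dm m n = ex n (\<lambda>i. \<alpha> i - m i) \<beta>"
proof (rule poly_mapping_eqI)
  fix v show "Poly_Mapping.lookup (ex n \<alpha> \<beta> - Dm m n) v = Poly_Mapping.lookup (ex n (\<lambda>i. \<alpha> i - m i) \<beta>) v"
    by (cases v) (auto simp: lookup_ex lookup_minus lookup_Dm)
qed

definition perms :: "nat \<Rightarrow> (nat \<Rightarrow> nat) set" where
  "perms n = {p. p permutes {0..<n}}"

lemma Delta_sum: "Delta S = (\<Sum>\<sigma>\<in>perms (card S).
   Poly_Mapping.single (ex (card S) (\<lambda>i. fst (cells S ! \<sigma> i)) (\<lambda>i. snd (cells S ! \<sigma> i))) (of_int (sign \<sigma>)))"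
proof -
  let ?n = "card S"
  have "Delta S = (\<Sum>\<sigma>\<in>perms ?n. signof \<sigma> * (\<Prod>i = 0..<?n. mat ?n ?n
      (\<lambda>(r, t). Xv r ^ fst (cells S ! t) * Yv r ^ snd (cells S ! t)) $$ (i, \<sigma> i)))"
    unfolding Delta_def perms_def by (rule det_def') simp
  also have "\<dots> = (\<Sum>\<sigma>\<in>perms ?n.
   Poly_Mapping.single (ex (card S) (\<lambda>i. fst (cells S ! \<sigma> i)) (\<lambda>i. snd (cells S ! \<sigma> i))) (of_int (sign \<sigma>)))"
  proof (rule sum.cong[OF refl])
    fix \<sigma> assume s: "\<sigma> \<in> perms ?n"
    have "(\<Prod>i = 0..<?n. mat ?n ?n (\<lambda>(r, t). Xv r ^ fst (cells S ! t) * Yv r ^ snd (cells S ! t)) $$ (i, \<sigma> i))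
       = (\<Prod>i<?n. Poly_Mapping.single (Poly_Mapping.single (Inl i) (fst (cells S ! \<sigma> i)) + Poly_Mapping.single (Inr i) (snd (cells S ! \<sigma> i))) 1)"
      unfolding lessThan_atLeast0
    proof (rule prod.cong[OF refl])
      fix i assume i: "i \<in> {0..<?n}"
      then have "\<sigma> i < ?n" using s permutes_in_image[of \<sigma> "{0..<?n}" i] unfolding perms_def by auto
      then show "mat ?n ?n (\<lambda>(r, t). Xv r ^ fst (cells S ! t) * Yv r ^ snd (cells S ! t)) $$ (i, \<sigma> i)
        = Poly_Mapping.single (Poly_Mapping.single (Inl i) (fst (cells S ! \<sigma> i)) + Poly_Mapping.single (Inr i) (snd (cells S ! \<sigma> i))) 1"
        using i by (simp add: Xv_pow Yv_pow mult_single)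
    qed
    also have "\<dots> = Poly_Mapping.single (ex (card S) (\<lambda>i. fst (cells S ! \<sigma> i)) (\<lambda>i. snd (cells S ! \<sigma> i))) 1"
      unfolding prod_single ex_def ..
    finally show "signof \<sigma> * (\<Prod>i = 0..<?n. mat ?n ?n
      (\<lambda>(r, t). Xv r ^ fst (cells S ! t) * Yv r ^ snd (cells S ! t)) $$ (i, \<sigma> i)) =
      Poly_Mapping.single (ex (card S) (\<lambda>i. fst (cells S ! \<sigma> i)) (\<lambda>i. snd (cells S ! \<sigma> i))) (of_int (sign \<sigma>))"
      by (simp add: single_of_int[symmetric] mult_single del: single_of_int)
  qed
  finally show ?thesis .
qed

definition Mset :: "nat \<Rightarrow> nat \<Rightarrow> (nat \<Rightarrow> nat) set" where
  "Mset n k = {m \<in> {..<n} \<rightarrow>\<^sub>E {..k}. sum m {..<n} = k}"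

lemma hk_Delta: "hk_diff (card L) k (Delta L) = (\<Sum>m\<in>Mset (card L) k. \<Sum>\<sigma>\<in>perms (card L).
   Poly_Mapping.single (ex (card L) (\<lambda>i. fst (cells L ! \<sigma> i) - m i) (\<lambda>i. snd (cells L ! \<sigma> i)))
     (of_int (sign \<sigma>) * (\<Prod>i<card L. of_nat (ff (fst (cells L ! \<sigma> i)) (m i)))))"
  unfolding hk_diff_def Delta_sum Mset_def[symmetric] dx_all_sum dx_all_single ex_minus_Dm
  by (rule sum.cong[OF refl], rule sum.cong[OF refl]) (simp add: lookup_ex)


lemma ff_rat: "a \<le> p \<Longrightarrow> (of_nat (ff p (p - a)) :: rat) = fact p / fact a"
proof -
  assume h: "a \<le> p"
  have "ff p (p - a) * fact (p - (p - a)) = (fact p :: nat)" by (rule ff_fact) simp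
  then have "ff p (p - a) * fact a = (fact p :: nat)" using h by simp
  then have "(of_nat (ff p (p - a)) :: rat) * fact a = fact p"
    by (metis of_nat_fact of_nat_mult)
  then show ?thesis by (simp add: field_simps)
qed

lemma sum_m:
  fixes P Q a b :: "nat \<Rightarrow> nat" and s :: rat
  shows "(\<Sum>m\<in>Mset n k. if \<forall>i<n. P i - m i = a i \<and> Q i = b i then s * (\<Prod>i<n. of_nat (ff (P i) (m i))) else 0)
   = (if (\<forall>i<n. Q i = b i \<and> a i \<le> P i) \<and> (\<Sum>i<n. P i) = (\<Sum>i<n. a i) + k
      then s * (\<Prod>i<n. of_nat (ff (P i) (P i - a i))) else 0)"
proof (cases "\<forall>i<n. Q i = b i \<and> a i \<le> P i")
  case True
  define m0 where "m0 = restrict (\<lambda>i. P i - a i) {..<n}"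
  let ?t = "\<lambda>m. if \<forall>i<n. P i - m i = a i \<and> Q i = b i then s * (\<Prod>i<n. of_nat (ff (P i) (m i))) else (0::rat)"
  have t0: "?t m0 = s * (\<Prod>i<n. of_nat (ff (P i) (P i - a i)))"
    using True by (auto simp: m0_def intro!: prod.cong)
  have "(\<Sum>m\<in>Mset n k. ?t m) = (\<Sum>m\<in>Mset n k. if m = m0 then ?t m0 else 0)"
  proof (rule sum.cong[OF refl])
    fix m assume m: "m \<in> Mset n k"
    show "?t m = (if m = m0 then ?t m0 else 0)"
    proof (cases "?t m = 0")
      case True then show ?thesis by auto
    next
      case False
      then have c1: "\<forall>i<n. P i - m i = a i \<and> Q i = b i" and
        c2: "(\<Prod>i<n. (of_nat (ff (P i) (m i)) :: rat)) \<noteq> 0" by (auto split: if_splits)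
      have le: "m i \<le> P i" if "i < n" for i
      proof (rule ccontr)
        assume "\<not> m i \<le> P i"
        then have "ff (P i) (m i) = 0" by (intro ff_zero) simp
        then have "(\<Prod>i<n. (of_nat (ff (P i) (m i)) :: rat)) = 0"
          using that by (intro prod_zero) auto
        with c2 show False by simp
      qed
      have "m = m0"
      proof
        fix i show "m i = m0 i"
        proof (cases "i < n")
          case True then show ?thesis using c1 le[OF True] by (auto simp: m0_def)
        next
          case False then show ?thesis using m by (auto simp: m0_def Mset_def PiE_def extensional_def)
        qed
      qed
      then show ?thesis by (simp only: if_True simp_thms)
    qed
  qed
  also have "\<dots> = (if m0 \<in> Mset n k then ?t m0 else 0)"
    by (rule sum.delta[OF finite_subset[of _ "{..<n} \<rightarrow>\<^sub>E {..k}"]]) (auto simp: Mset_def intro: finite_PiE)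
  also have "m0 \<in> Mset n k \<longleftrightarrow> (\<Sum>i<n. P i) = (\<Sum>i<n. a i) + k"
  proof -
    have s0: "sum m0 {..<n} = (\<Sum>i<n. P i) - (\<Sum>i<n. a i)"
    proof -
      have "sum m0 {..<n} = (\<Sum>i<n. P i - a i)" unfolding m0_def by simp
      also have "\<dots> = (\<Sum>i<n. P i) - (\<Sum>i<n. a i)" by (rule sum_subtractf_nat) (use True in auto)
      finally show ?thesis .
    qed
    have le: "(\<Sum>i<n. a i) \<le> (\<Sum>i<n. P i)" using True by (intro sum_mono) auto
    have "m0 i \<le> sum m0 {..<n}" if "i < n" for i
      by (rule member_le_sum) (use that in auto)
    then show ?thesis unfolding Mset_def using s0 le
      by (auto simp: m0_def PiE_def extensional_def)
  qed
  finally show ?thesis using True t0 by simp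
next
  case False
  then obtain j where j: "j < n" "\<not> (Q j = b j \<and> a j \<le> P j)" by auto
  have "(\<Sum>m\<in>Mset n k. if \<forall>i<n. P i - m i = a i \<and> Q i = b i then s * (\<Prod>i<n. of_nat (ff (P i) (m i))) else 0) = 0"
  proof (rule sum.neutral, rule ballI)
    fix m
    have "\<not> (\<forall>i<n. P i - m i = a i \<and> Q i = b i)"
    proof
      assume "\<forall>i<n. P i - m i = a i \<and> Q i = b i"
      then have "P j - m j = a j" "Q j = b j" using j by auto
      with j show False by auto
    qed
    then show "(if \<forall>i<n. P i - m i = a i \<and> Q i = b i then s * (\<Prod>i<n. of_nat (ff (P i) (m i))) else 0) = 0" by (rule if_not_P)
  qed
  moreover have nc: "\<not> ((\<forall>i<n. Q i = b i \<and> a i \<le> P i) \<and> (\<Sum>i<n. P i) = (\<Sum>i<n. a i) + k)"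
    using False by blast
  ultimately show ?thesis unfolding if_not_P[OF nc] by blast
qed

definition BM :: "(nat \<times> nat) set \<Rightarrow> (nat \<Rightarrow> nat) \<Rightarrow> (nat \<Rightarrow> nat) \<Rightarrow> rat mat" where
  "BM L a b = mat (card L) (card L) (\<lambda>(i, t). if snd (cells L ! t) = b i \<and> a i \<le> fst (cells L ! t) then 1 else 0)"

lemma perms_lt: "\<sigma> \<in> perms n \<Longrightarrow> i < n \<Longrightarrow> \<sigma> i < n"
  unfolding perms_def using permutes_in_image[of \<sigma> "{0..<n}" i] by auto

lemma perms_sum: "\<sigma> \<in> perms n \<Longrightarrow> (\<Sum>i<n. f (\<sigma> i)) = (\<Sum>i<n. f i)"
  unfolding perms_def lessThan_atLeast0
  using sum.reindex_bij_betw[OF permutes_imp_bij, of \<sigma> "{0..<n}" f] by simp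

lemma perms_prod: "\<sigma> \<in> perms n \<Longrightarrow> (\<Prod>i<n. f (\<sigma> i)) = (\<Prod>i<n. f i)"
  unfolding perms_def lessThan_atLeast0
  using prod.reindex_bij_betw[OF permutes_imp_bij, of \<sigma> "{0..<n}" f] by simp

lemma LHS_coeff:
  fixes a b :: "nat \<Rightarrow> nat" and L :: "(nat \<times> nat) set" and k :: nat
  defines "n \<equiv> card L"
  shows "Poly_Mapping.lookup (hk_diff n k (Delta L)) (ex n a b) =
    (if (\<Sum>t<n. fst (cells L ! t)) = (\<Sum>i<n. a i) + k
     then (\<Prod>t<n. fact (fst (cells L ! t))) / (\<Prod>i<n. fact (a i)) * det (BM L a b) else 0)"
proof -
  let ?p = "\<lambda>t. fst (cells L ! t)" and ?q = "\<lambda>t. snd (cells L ! t)"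
  let ?C = "(\<Sum>t<n. ?p t) = (\<Sum>i<n. a i) + k"
  let ?K = "(\<Prod>t<n. fact (?p t)) / (\<Prod>i<n. fact (a i)) :: rat"
  let ?B = "\<lambda>i t. if ?q t = b i \<and> a i \<le> ?p t then 1 else (0::rat)"
  have "Poly_Mapping.lookup (hk_diff n k (Delta L)) (ex n a b) =
    (\<Sum>m\<in>Mset n k. \<Sum>\<sigma>\<in>perms n. if \<forall>i<n. ?p (\<sigma> i) - m i = a i \<and> ?q (\<sigma> i) = b i
       then of_int (sign \<sigma>) * (\<Prod>i<n. of_nat (ff (?p (\<sigma> i)) (m i))) else 0)"
    unfolding n_def hk_Delta lookup_sum lookup_single when_def ex_eq_iff by simp
  also have "\<dots> = (\<Sum>\<sigma>\<in>perms n. \<Sum>m\<in>Mset n k. if \<forall>i<n. ?p (\<sigma> i) - m i = a i \<and> ?q (\<sigma> i) = b i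
       then of_int (sign \<sigma>) * (\<Prod>i<n. of_nat (ff (?p (\<sigma> i)) (m i))) else 0)"
    by (rule sum.swap)
  also have "\<dots> = (\<Sum>\<sigma>\<in>perms n. if ?C then ?K * (of_int (sign \<sigma>) * (\<Prod>i = 0..<n. BM L a b $$ (i, \<sigma> i))) else 0)"
  proof (rule sum.cong[OF refl])
    fix \<sigma> assume s: "\<sigma> \<in> perms n"
    have ps: "(\<Sum>i<n. ?p (\<sigma> i)) = (\<Sum>t<n. ?p t)" by (rule perms_sum[OF s])
    have bm: "BM L a b $$ (i, \<sigma> i) = ?B i (\<sigma> i)" if "i < n" for i
      using that perms_lt[OF s that] by (simp add: BM_def n_def)
    have pr: "(\<Prod>i = 0..<n. BM L a b $$ (i, \<sigma> i)) = (\<Prod>i<n. ?B i (\<sigma> i))"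
      unfolding lessThan_atLeast0[symmetric] by (rule prod.cong) (auto simp: bm)
    show "(\<Sum>m\<in>Mset n k. if \<forall>i<n. ?p (\<sigma> i) - m i = a i \<and> ?q (\<sigma> i) = b i
       then of_int (sign \<sigma>) * (\<Prod>i<n. of_nat (ff (?p (\<sigma> i)) (m i))) else 0) =
       (if ?C then ?K * (of_int (sign \<sigma>) * (\<Prod>i = 0..<n. BM L a b $$ (i, \<sigma> i))) else 0)"
      unfolding sum_m ps pr
    proof (cases "\<forall>i<n. ?q (\<sigma> i) = b i \<and> a i \<le> ?p (\<sigma> i)")
      case True
      have "(\<Prod>i<n. (of_nat (ff (?p (\<sigma> i)) (?p (\<sigma> i) - a i)) :: rat))
          = (\<Prod>i<n. fact (?p (\<sigma> i)) / fact (a i))"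
        using True by (intro prod.cong) (auto simp: ff_rat)
      also have "\<dots> = ?K" using perms_prod[OF s, of "\<lambda>t. fact (?p t) :: rat"] by (simp add: prod_dividef)
      finally have 1: "(\<Prod>i<n. (of_nat (ff (?p (\<sigma> i)) (?p (\<sigma> i) - a i)) :: rat)) = ?K" .
      have 2: "(\<Prod>i<n. ?B i (\<sigma> i)) = 1" using True by (intro prod.neutral) auto
      show "(if (\<forall>i<n. ?q (\<sigma> i) = b i \<and> a i \<le> ?p (\<sigma> i)) \<and> ?C
        then of_int (sign \<sigma>) * (\<Prod>i<n. of_nat (ff (?p (\<sigma> i)) (?p (\<sigma> i) - a i))) else 0) =
        (if ?C then ?K * (of_int (sign \<sigma>) * (\<Prod>i<n. ?B i (\<sigma> i))) else 0)"
        using True by (simp add: 1 2)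
    next
      case False
      then obtain j where j: "j < n" "\<not> (?q (\<sigma> j) = b j \<and> a j \<le> ?p (\<sigma> j))" by auto
      have z: "(\<Prod>i<n. ?B i (\<sigma> i)) = 0" using j by (intro prod_zero) auto
      have nc: "\<not> ((\<forall>i<n. ?q (\<sigma> i) = b i \<and> a i \<le> ?p (\<sigma> i)) \<and> ?C)" using False by blast
      show "(if (\<forall>i<n. ?q (\<sigma> i) = b i \<and> a i \<le> ?p (\<sigma> i)) \<and> ?C
        then of_int (sign \<sigma>) * (\<Prod>i<n. of_nat (ff (?p (\<sigma> i)) (?p (\<sigma> i) - a i))) else 0) =
        (if ?C then ?K * (of_int (sign \<sigma>) * (\<Prod>i<n. ?B i (\<sigma> i))) else 0)"
        unfolding if_not_P[OF nc] z by simp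
    qed
  qed
  also have "\<dots> = (if ?C then ?K * det (BM L a b) else 0)"
  proof -
    have "det (BM L a b) = (\<Sum>\<sigma>\<in>perms n. of_int (sign \<sigma>) * (\<Prod>i = 0..<n. BM L a b $$ (i, \<sigma> i)))"
      unfolding perms_def by (rule det_def') (simp add: BM_def n_def)
    then show ?thesis by (simp add: sum_distrib_left)
  qed
  finally show ?thesis .
qed


definition lt :: "nat \<times> nat \<Rightarrow> nat \<times> nat \<Rightarrow> bool" where
  "lt x y \<longleftrightarrow> snd x < snd y \<or> (snd x = snd y \<and> fst x < fst y)"

definition le :: "nat \<times> nat \<Rightarrow> nat \<times> nat \<Rightarrow> bool" where
  "le x y \<longleftrightarrow> lt x y \<or> x = y"

lemma lt_irrefl[simp]: "\<not> lt x x" by (simp add: lt_def)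
lemma lt_trans: "lt x y \<Longrightarrow> lt y z \<Longrightarrow> lt x z" by (auto simp: lt_def)
lemma lt_asym: "lt x y \<Longrightarrow> \<not> lt y x" by (auto simp: lt_def)
lemma lt_total: "lt x y \<or> x = y \<or> lt y x" by (cases x; cases y) (auto simp: lt_def)
lemma not_lt: "\<not> lt x y \<longleftrightarrow> le y x" by (cases x; cases y) (auto simp: le_def lt_def)

definition sw :: "nat \<times> nat \<Rightarrow> nat \<times> nat" where "sw = (\<lambda>(p, q). (q, p))"

lemma sw_sw[simp]: "sw (sw x) = x" by (cases x) (simp add: sw_def)
lemma inj_sw: "inj sw"
proof (rule injI)
  fix x y assume "sw x = sw y"
  then have "sw (sw x) = sw (sw y)" by simp
  then show "x = y" by simp
qed
lemma lt_sw: "lt (sw a) (sw b) \<longleftrightarrow> a < b"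
  by (cases a; cases b) (auto simp: lt_def sw_def)

lemma cells_sw: "cells S = map sw (sorted_list_of_set (sw ` S))"
  unfolding cells_def sw_def ..

lemma length_cells: "length (cells S) = card S"
  unfolding cells_sw by (simp add: card_image inj_on_subset[OF inj_sw])

lemma set_cells: "finite S \<Longrightarrow> set (cells S) = S"
  unfolding cells_sw by (simp add: image_image)

lemma distinct_cells: "distinct (cells S)"
  unfolding cells_sw by (simp add: distinct_map inj_on_subset[OF inj_sw])

lemma cells_lt: "i < j \<Longrightarrow> j < card S \<Longrightarrow> lt (cells S ! i) (cells S ! j)"
proof -
  assume ij: "i < j" "j < card S"
  let ?xs = "sorted_list_of_set (sw ` S)"
  have len: "length ?xs = card S" using length_cells[of S] by (simp add: cells_sw)
  have sw: "sorted_wrt (<) ?xs" by (rule strict_sorted_list_of_set)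
  have "?xs ! i < ?xs ! j"
    using sorted_wrt_nth_less[OF sw] ij len by auto
  then show ?thesis using ij len by (simp add: cells_sw lt_sw)
qed

lemma cells_lt_iff: "i < card S \<Longrightarrow> j < card S \<Longrightarrow> lt (cells S ! i) (cells S ! j) \<longleftrightarrow> i < j"
  using cells_lt[of i j S] cells_lt[of j i S] lt_asym by (cases i j rule: linorder_cases) auto

lemma cells_in: "finite S \<Longrightarrow> i < card S \<Longrightarrow> cells S ! i \<in> S"
proof -
  assume "finite S" "i < card S"
  then have "cells S ! i \<in> set (cells S)" using length_cells[of S] by (intro nth_mem) simp
  then show ?thesis using set_cells[OF \<open>finite S\<close>] by simp
qed

lemma cells_ex: "finite S \<Longrightarrow> x \<in> S \<Longrightarrow> \<exists>i<card S. cells S ! i = x"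
proof -
  assume "finite S" "x \<in> S"
  then have "x \<in> set (cells S)" using set_cells by simp
  then show ?thesis unfolding in_set_conv_nth length_cells by blast
qed

lemma cells_inj: "i < card S \<Longrightarrow> j < card S \<Longrightarrow> cells S ! i = cells S ! j \<longleftrightarrow> i = j"
  using distinct_cells[of S] length_cells[of S] by (simp add: nth_eq_iff_index_eq)

definition N :: "(nat \<times> nat) set \<Rightarrow> nat \<times> nat \<Rightarrow> nat" where
  "N S x = card {y \<in> S. lt y x}"

lemma downclosed:
  fixes D :: "nat set"
  assumes "finite D" "\<And>i j. i \<in> D \<Longrightarrow> j < i \<Longrightarrow> j \<in> D"
  shows "D = {..<card D}"
proof (cases "D = {}")
  case True then show ?thesis by simp
next
  case False
  define m where "m = Max D"
  have mD: "m \<in> D" using False assms(1) by (simp add: m_def)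
  have "D = {..m}"
  proof
    show "D \<subseteq> {..m}" using assms(1) by (auto simp: m_def)
    show "{..m} \<subseteq> D"
    proof
      fix y assume "y \<in> {..m}"
      then have "y = m \<or> y < m" by auto
      then show "y \<in> D" using mD assms(2) by auto
    qed
  qed
  then show ?thesis by auto
qed

lemma N_iff:
  assumes "finite S" "i < card S"
  shows "lt (cells S ! i) x \<longleftrightarrow> i < N S x"
proof -
  let ?c = "\<lambda>i. cells S ! i"
  define D where "D = {i. i < card S \<and> lt (?c i) x}"
  have fD: "finite D" by (simp add: D_def)
  have dc: "j \<in> D" if "i \<in> D" "j < i" for i j
    using that cells_lt[of j i S] by (auto simp: D_def intro: lt_trans)
  have "{y \<in> S. lt y x} = ?c ` D"
  proof
    show "{y \<in> S. lt y x} \<subseteq> ?c ` D"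
    proof
      fix y assume "y \<in> {y \<in> S. lt y x}"
      then obtain j where "j < card S" "?c j = y" "lt y x" using cells_ex[OF assms(1)] by blast
      then show "y \<in> ?c ` D" by (auto simp: D_def)
    qed
    show "?c ` D \<subseteq> {y \<in> S. lt y x}" using cells_in[OF assms(1)] by (auto simp: D_def)
  qed
  moreover have "inj_on ?c D" using cells_inj by (auto simp: D_def inj_on_def)
  ultimately have NX: "N S x = card D" by (simp add: N_def card_image)
  obtain m where m: "m = card D" by simp
  have Deq: "D = {..<m}" unfolding m by (rule downclosed[OF fD dc])
  have "lt (?c i) x \<longleftrightarrow> i \<in> D" using assms(2) by (simp add: D_def)
  also have "\<dots> \<longleftrightarrow> i < m" by (subst Deq) simp
  also have "\<dots> \<longleftrightarrow> i < N S x" using NX m by simp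
  finally show ?thesis .
qed

lemma N_cells: "finite S \<Longrightarrow> i < card S \<Longrightarrow> N S (cells S ! i) = i"
proof -
  assume f: "finite S" and i: "i < card S"
  have "N S (cells S ! i) \<le> card S" unfolding N_def by (rule card_mono[OF f]) auto
  have "j < i \<longleftrightarrow> j < N S (cells S ! i)" if "j < card S" for j
    using N_iff[OF f that] cells_lt_iff[OF that i] by simp
  note h = this
  show ?thesis
  proof (cases "N S (cells S ! i)" i rule: linorder_cases)
    case less
    then have "N S (cells S ! i) < card S" using i by simp
    then show ?thesis using h[of "N S (cells S ! i)"] less by simp
  next
    case greater
    then show ?thesis using h[of i] i by simp
  qed simp
qed

lemma N_le: "finite S \<Longrightarrow> N S x \<le> card S"
  unfolding N_def by (rule card_mono) auto

lemma N_mono: "finite S \<Longrightarrow> le x y \<Longrightarrow> N S x \<le> N S y"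
  unfolding N_def le_def by (rule card_mono) (auto intro: lt_trans)


definition good :: "(nat \<times> nat) set \<Rightarrow> (nat \<times> nat) set \<Rightarrow> bool" where
  "good L S \<longleftrightarrow> (\<forall>u\<in>S. N L u = N S u \<and> (\<exists>c\<in>L. N L c = N S u \<and> snd c = snd u))"

definition AM :: "(nat \<times> nat) set \<Rightarrow> (nat \<times> nat) set \<Rightarrow> rat mat" where
  "AM L S = mat (card L) (card L) (\<lambda>(s, t). if snd (cells L ! t) = snd (cells S ! s) \<and> fst (cells S ! s) \<le> fst (cells L ! t) then 1 else 0)"

lemma good_cells:
  assumes fL: "finite L" and fS: "finite S" and cS: "card S = card L" and g: "good L S" and s: "s < card L"
  shows "N L (cells S ! s) = s \<and> snd (cells L ! s) = snd (cells S ! s) \<and> fst (cells S ! s) \<le> fst (cells L ! s)"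
proof -
  let ?u = "cells S ! s"
  have uS: "?u \<in> S" using cells_in[OF fS] s cS by simp
  have NS: "N S ?u = s" using N_cells[OF fS] s cS by simp
  obtain c where c: "c \<in> L" "N L c = s" "snd c = snd ?u" and NL: "N L ?u = s"
    using g uS NS unfolding good_def by auto
  obtain j where j: "j < card L" "cells L ! j = c" using cells_ex[OF fL c(1)] by blast
  have "j = s" using N_cells[OF fL j(1)] j(2) c(2) by simp
  then have cs: "cells L ! s = c" using j by simp
  have "\<not> lt (cells L ! s) ?u" using N_iff[OF fL s] NL by simp
  then have "le ?u (cells L ! s)" by (simp add: not_lt)
  then show ?thesis using NL cs c(3) by (auto simp: le_def lt_def)
qed

lemma det_AM_good:
  assumes fL: "finite L" and fS: "finite S" and cS: "card S = card L" and g: "good L S"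
  shows "det (AM L S) = 1"
proof -
  let ?n = "card L"
  have ut: "upper_triangular (AM L S)"
    unfolding upper_triangular_def
  proof (intro allI impI)
    fix s t assume s: "s < dim_row (AM L S)" and t: "t < s"
    then have s': "s < ?n" by (simp add: AM_def)
    have "lt (cells L ! t) (cells S ! s)"
      using N_iff[OF fL, of t "cells S ! s"] good_cells[OF fL fS cS g s'] t s' by simp
    then show "AM L S $$ (s, t) = 0" using s' t by (auto simp: AM_def lt_def)
  qed
  have sq: "AM L S \<in> carrier_mat ?n ?n" by (simp add: AM_def)
  have "det (AM L S) = prod_list (diag_mat (AM L S))"
    by (rule det_upper_triangular[OF ut sq])
  also have "\<dots> = (\<Prod>i = 0..<?n. AM L S $$ (i, i))" by (simp add: prod_list_diag_prod AM_def)
  also have "\<dots> = 1"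
    by (rule prod.neutral) (use good_cells[OF fL fS cS g] in \<open>auto simp: AM_def\<close>)
  finally show ?thesis .
qed

lemma det_AM_nz_good:
  assumes fL: "finite L" and fS: "finite S" and cS: "card S = card L" and nz: "det (AM L S) \<noteq> 0"
  shows "good L S"
proof -
  let ?n = "card L"
  let ?d = "\<lambda>s. cells S ! s" and ?c = "\<lambda>t. cells L ! t"
  define lo where "lo s = N L (?d s)" for s
  define hi where "hi s = N L (0, Suc (snd (?d s)))" for s
  have entry: "AM L S $$ (s, t) = (if lo s \<le> t \<and> t < hi s then 1 else 0)" if "s < ?n" "t < ?n" for s t
  proof -
    have 1: "lo s \<le> t \<longleftrightarrow> \<not> lt (?c t) (?d s)" using N_iff[OF fL that(2)] by (auto simp: lo_def)
    have 2: "t < hi s \<longleftrightarrow> lt (?c t) (0, Suc (snd (?d s)))" using N_iff[OF fL that(2)] by (auto simp: hi_def)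
    show ?thesis using that unfolding AM_def 1 2 by (auto simp: lt_def)
  qed
  have sq: "AM L S \<in> carrier_mat ?n ?n" by (simp add: AM_def)
  obtain \<sigma> where \<sigma>: "\<sigma> permutes {0..<?n}" and \<sigma>nz: "\<forall>s<?n. AM L S $$ (s, \<sigma> s) \<noteq> 0"
  proof (rule ccontr)
    assume "\<not> thesis"
    with that have h: "\<forall>\<sigma>. \<sigma> permutes {0..<?n} \<longrightarrow> (\<exists>s<?n. AM L S $$ (s, \<sigma> s) = 0)" by blast
    have "det (AM L S) = (\<Sum>\<sigma>\<in>{\<sigma>. \<sigma> permutes {0..<?n}}. signof \<sigma> * (\<Prod>i = 0..<?n. AM L S $$ (i, \<sigma> i)))"
      by (rule det_def'[OF sq])
    also have "\<dots> = 0"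
    proof (rule sum.neutral, rule ballI)
      fix \<sigma> assume "\<sigma> \<in> {\<sigma>. \<sigma> permutes {0..<?n}}"
      then obtain s where "s < ?n" "AM L S $$ (s, \<sigma> s) = 0" using h by auto
      then have "(\<Prod>i = 0..<?n. AM L S $$ (i, \<sigma> i)) = 0" by (intro prod_zero) auto
      then show "signof \<sigma> * (\<Prod>i = 0..<?n. AM L S $$ (i, \<sigma> i)) = 0" by simp
    qed
    finally show False using nz by simp
  qed
  have \<sigma>lt: "\<sigma> s < ?n" if "s < ?n" for s using permutes_in_image[OF \<sigma>, of s] that by simp
  have \<sigma>in: "lo s \<le> \<sigma> s \<and> \<sigma> s < hi s" if "s < ?n" for s
    using \<sigma>nz entry[OF that \<sigma>lt[OF that]] that by (auto split: if_splits)
  have dle: "le (?d s) (?d s')" if "s \<le> s'" "s' < ?n" for s s'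
    using cells_lt[of s s' S] that cS by (cases "s = s'") (auto simp: le_def)
  have lo_mono: "lo s \<le> lo s'" if "s \<le> s'" "s' < ?n" for s s'
    unfolding lo_def by (rule N_mono[OF fL dle[OF that]])
  have hi_mono: "hi s \<le> hi s'" if "s \<le> s'" "s' < ?n" for s s'
  proof -
    have "snd (?d s) \<le> snd (?d s')" using dle[OF that] by (auto simp: le_def lt_def)
    then have "le (0, Suc (snd (?d s))) (0, Suc (snd (?d s')))" by (auto simp: le_def lt_def)
    then show ?thesis unfolding hi_def by (rule N_mono[OF fL])
  qed
  have inj\<sigma>: "inj_on \<sigma> A" for A using permutes_inj[OF \<sigma>] by (rule inj_on_subset) simp
  have lo_le: "lo s \<le> s" if s: "s < ?n" for s
  proof -
    have "\<sigma> ` {s..<?n} \<subseteq> {lo s..<?n}"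
    proof
      fix y assume "y \<in> \<sigma> ` {s..<?n}"
      then obtain s' where s': "s \<le> s'" "s' < ?n" "y = \<sigma> s'" by auto
      then show "y \<in> {lo s..<?n}" using \<sigma>in[OF s'(2)] lo_mono[OF s'(1,2)] \<sigma>lt[OF s'(2)] by auto
    qed
    then have "card {s..<?n} \<le> card {lo s..<?n}" by (intro card_inj_on_le[OF inj\<sigma>]) auto
    then show ?thesis using s by simp
  qed
  have lt_hi: "s < hi s" if s: "s < ?n" for s
  proof -
    have "\<sigma> ` {0..s} \<subseteq> {0..<hi s}"
    proof
      fix y assume "y \<in> \<sigma> ` {0..s}"
      then obtain s' where s': "s' \<le> s" "y = \<sigma> s'" by auto
      then show "y \<in> {0..<hi s}" using \<sigma>in[of s'] hi_mono[OF s'(1) s] s by auto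
    qed
    then have "card {0..s} \<le> card {0..<hi s}" by (intro card_inj_on_le[OF inj\<sigma>]) auto
    then show ?thesis by simp
  qed
  have lo_eq: "lo s = s" if "s < ?n" for s
    using that
  proof (induction s)
    case 0 then show ?case using lo_le[of 0] by simp
  next
    case (Suc s)
    then have s: "s < ?n" by simp
    have ih: "lo s = s" using Suc by simp
    have a: "s \<le> lo (Suc s)" using lo_mono[of s "Suc s"] Suc.prems ih by simp
    have b: "lo (Suc s) \<le> Suc s" using lo_le[OF Suc.prems] .
    show ?case
    proof (rule ccontr)
      assume "lo (Suc s) \<noteq> Suc s"
      then have e: "lo (Suc s) = s" using a b by simp
      have "lt (?c s) (0, Suc (snd (?d s)))" using N_iff[OF fL s] lt_hi[OF s] by (simp add: hi_def)
      then have 1: "snd (?c s) \<le> snd (?d s)" by (auto simp: lt_def)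
      have "\<not> lt (?c s) (?d (Suc s))" using N_iff[OF fL s] e by (simp add: lo_def)
      then have "le (?d (Suc s)) (?c s)" by (simp add: not_lt)
      then have 2: "snd (?d (Suc s)) \<le> snd (?c s)" by (auto simp: le_def lt_def)
      have "lt (?d s) (?d (Suc s))" using cells_lt[of s "Suc s" S] Suc.prems cS by simp
      then have 3: "snd (?d s) \<le> snd (?d (Suc s))" by (auto simp: lt_def)
      have "snd (?d s) = snd (?d (Suc s))" using 1 2 3 by simp
      then have hh: "hi s = hi (Suc s)" unfolding hi_def by simp
      have "row (AM L S) s = row (AM L S) (Suc s)"
      proof -
        have "AM L S $$ (s, t) = AM L S $$ (Suc s, t)" if "t < ?n" for t
          using entry[OF s that] entry[OF Suc.prems that] hh ih e by simp
        then show ?thesis using s Suc.prems by (auto simp: AM_def)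
      qed
      then have "det (AM L S) = 0" by (rule det_identical_rows[OF sq _ s Suc.prems, rotated]) simp
      with nz show False by simp
    qed
  qed
  show ?thesis unfolding good_def
  proof
    fix u assume u: "u \<in> S"
    obtain s where s: "s < ?n" "?d s = u" using cells_ex[OF fS u] cS by auto
    have NS: "N S u = s" using N_cells[OF fS] s cS by auto
    have NL: "N L u = s" using lo_eq[OF s(1)] s(2) by (simp add: lo_def)
    have "lt (?c s) (0, Suc (snd (?d s)))" using N_iff[OF fL s(1)] lt_hi[OF s(1)] by (simp add: hi_def)
    then have 1: "snd (?c s) \<le> snd (?d s)" by (auto simp: lt_def)
    have "\<not> lt (?c s) (?d s)" using N_iff[OF fL s(1)] lo_eq[OF s(1)] by (simp add: lo_def)
    then have "le (?d s) (?c s)" by (simp add: not_lt)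
    then have 2: "snd (?d s) \<le> snd (?c s)" by (auto simp: le_def lt_def)
    have "?c s \<in> L" "N L (?c s) = s" using cells_in[OF fL s(1)] N_cells[OF fL s(1)] by auto
    then show "N L u = N S u \<and> (\<exists>c\<in>L. N L c = N S u \<and> snd c = snd u)"
      using NS NL 1 2 s(2) by force
  qed
qed

lemma det_AM: "finite L \<Longrightarrow> finite S \<Longrightarrow> card S = card L \<Longrightarrow> det (AM L S) = (if good L S then 1 else 0)"
  using det_AM_good det_AM_nz_good by auto


definition sh :: "nat \<times> nat \<Rightarrow> nat \<times> nat" where "sh x = (Suc (fst x), snd x)"

lemma inj_sh: "inj sh" by (auto simp: inj_def sh_def prod_eq_iff)
lemma lt_sh: "lt x (sh x)" by (simp add: lt_def sh_def)
lemma lt_sh_iff: "lt r y \<longleftrightarrow> lt (sh r) y \<or> sh r = y"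
  by (cases r; cases y) (auto simp: lt_def sh_def)
lemma lt_to_sh: "lt a (sh x) \<Longrightarrow> le a x"
  by (cases a; cases x) (auto simp: lt_def le_def sh_def)
lemma le_trans': "le x y \<Longrightarrow> le y z \<Longrightarrow> le x z" by (auto simp: le_def intro: lt_trans)
lemma lt_le_trans: "lt x y \<Longrightarrow> le y z \<Longrightarrow> lt x z" by (auto simp: le_def intro: lt_trans)
lemma le_lt_trans: "le x y \<Longrightarrow> lt y z \<Longrightarrow> lt x z" by (auto simp: le_def intro: lt_trans)

lemma hk_diag_eq: "hk_diag L R = (L \<union> R) - sh ` R"
proof -
  have "(\<lambda>(p, q). (p + 1, q)) = sh" by (rule ext) (auto simp: sh_def split: prod.splits)
  then have "(\<lambda>(p, q). (p + 1, q)) ` R = sh ` R" by simp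
  then show ?thesis unfolding hk_diag_def by auto
qed

definition RS :: "(nat \<times> nat) set \<Rightarrow> (nat \<times> nat) set \<Rightarrow> (nat \<times> nat) set" where
  "RS L S = {x. N S (sh x) = N L (sh x) + 1}"

lemma V1:
  assumes fL: "finite L" and RL: "R \<subseteq> - L" and fR: "finite R" and c: "card (hk_diag L R) = card L"
  shows "sh ` R \<subseteq> L \<union> R"
proof (rule ccontr)
  assume nsub: "\<not> sh ` R \<subseteq> L \<union> R"
  have f: "finite (L \<union> R)" using fL fR by simp
  have dis: "L \<inter> R = {}" using RL by auto
  have "card ((L \<union> R) \<inter> sh ` R) < card (sh ` R)"
    using nsub fR by (intro psubset_card_mono) auto
  also have "card (sh ` R) = card R" using inj_sh by (simp add: card_image inj_on_subset)
  finally have lt1: "card ((L \<union> R) \<inter> sh ` R) < card R" .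
  have "card (hk_diag L R) = card (L \<union> R) - card ((L \<union> R) \<inter> sh ` R)"
    unfolding hk_diag_eq using f by (simp add: card_Diff_subset_Int)
  also have "card (L \<union> R) = card L + card R" using fL fR dis by (simp add: card_Un_disjoint)
  finally show False using c lt1 by simp
qed

lemma V2:
  assumes fL: "finite L" and RL: "R \<subseteq> - L" and fR: "finite R" and sub: "sh ` R \<subseteq> L \<union> R"
  shows "sum fst (hk_diag L R) + card R = sum fst L"
proof -
  have f: "finite (L \<union> R)" using fL fR by simp
  have dis: "L \<inter> R = {}" using RL by auto
  have "sum fst (L \<union> R) = sum fst ((L \<union> R) - sh ` R) + sum fst (sh ` R)"
    by (rule sum.subset_diff[OF sub f])
  moreover have "sum fst (L \<union> R) = sum fst L + sum fst R" using fL fR dis by (simp add: sum.union_disjoint)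
  moreover have "sum fst (sh ` R) = sum fst R + card R"
  proof -
    have "sum fst (sh ` R) = (\<Sum>r\<in>R. fst (sh r))" using inj_sh by (simp add: sum.reindex inj_on_subset)
    also have "\<dots> = (\<Sum>r\<in>R. fst r + 1)" by (simp add: sh_def)
    also have "\<dots> = sum fst R + card R" using fR by (induction R rule: finite_induct) auto
    finally show ?thesis .
  qed
  ultimately show ?thesis unfolding hk_diag_eq by simp
qed

lemma V3:
  assumes fL: "finite L" and RL: "R \<subseteq> - L" and fR: "finite R" and sub: "sh ` R \<subseteq> L \<union> R"
  shows "N (hk_diag L R) y = N L y + (if y \<in> sh ` R then 1 else 0)"
proof -
  let ?A = "{z \<in> L \<union> R. lt z y}" and ?B = "{z \<in> sh ` R. lt z y}"
  have dis: "L \<inter> R = {}" using RL by auto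
  have e1: "{z \<in> hk_diag L R. lt z y} = ?A - ?B" unfolding hk_diag_eq by blast
  have BA: "?B \<subseteq> ?A" using sub by blast
  have fA: "finite ?A" using fL fR by simp
  have c1: "N (hk_diag L R) y = card ?A - card ?B"
    unfolding N_def e1 by (rule card_Diff_subset[OF finite_subset[OF BA fA] BA])
  have c2: "card ?A = N L y + card {z \<in> R. lt z y}"
  proof -
    have e: "?A = {z \<in> L. lt z y} \<union> {z \<in> R. lt z y}" by blast
    have "card ({z \<in> L. lt z y} \<union> {z \<in> R. lt z y}) = card {z \<in> L. lt z y} + card {z \<in> R. lt z y}"
      by (rule card_Un_disjoint) (use fL fR dis in auto)
    then show ?thesis unfolding e N_def .
  qed
  have c3: "card ?B = card {r \<in> R. lt (sh r) y}"
  proof -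
    have e: "?B = sh ` {r \<in> R. lt (sh r) y}" by blast
    have "inj_on sh {r \<in> R. lt (sh r) y}" using inj_sh by (rule inj_on_subset) simp
    then show ?thesis unfolding e by (rule card_image)
  qed
  have c4: "card {z \<in> R. lt z y} = card {r \<in> R. lt (sh r) y} + (if y \<in> sh ` R then 1 else 0)"
  proof -
    have e: "{z \<in> R. lt z y} = {r \<in> R. lt (sh r) y} \<union> {r \<in> R. sh r = y}"
      using lt_sh_iff by blast
    have d: "{r \<in> R. lt (sh r) y} \<inter> {r \<in> R. sh r = y} = {}" by auto
    have c: "card {r \<in> R. sh r = y} = (if y \<in> sh ` R then 1 else 0)"
    proof (cases "y \<in> sh ` R")
      case True
      then obtain r where r: "r \<in> R" "sh r = y" by auto
      have "{r \<in> R. sh r = y} = {r}"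
      proof
        show "{r} \<subseteq> {r \<in> R. sh r = y}" using r by simp
        show "{r \<in> R. sh r = y} \<subseteq> {r}" using r inj_sh unfolding inj_def by blast
      qed
      then show ?thesis using True by simp
    next
      case False
      then have "{r \<in> R. sh r = y} = {}" by blast
      then show ?thesis using False by (simp only: card.empty if_False)
    qed
    have "card ({r \<in> R. lt (sh r) y} \<union> {r \<in> R. sh r = y}) = card {r \<in> R. lt (sh r) y} + card {r \<in> R. sh r = y}"
      by (rule card_Un_disjoint) (use fR d in auto)
    then show ?thesis unfolding e c .
  qed
  show ?thesis unfolding c1 c2 c3 c4 by simp
qed

lemma CH:
  assumes RL: "R \<subseteq> - L" and fR: "finite R" and sub: "sh ` R \<subseteq> L \<union> R" and x: "x \<in> L \<union> R"
  shows "\<exists>c\<in>L. snd c = snd x \<and> fst x \<le> fst c \<and> (\<forall>z. snd z = snd x \<and> fst x \<le> fst z \<and> fst z < fst c \<longrightarrow> z \<in> R)"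
proof -
  define Mb where "Mb = Suc (Max (fst ` R))"
  have bnd: "fst r < Mb" if "r \<in> R" for r
    using that fR by (simp add: Mb_def le_imp_less_Suc)
  show ?thesis using x
  proof (induction "Mb - fst x" arbitrary: x rule: less_induct)
    case less
    show ?case
    proof (cases "x \<in> L")
      case True
      then show ?thesis by (intro bexI[of _ x]) auto
    next
      case False
      then have xR: "x \<in> R" using less.prems by auto
      have shx: "sh x \<in> L \<union> R" using sub xR by auto
      have "Mb - fst (sh x) < Mb - fst x" using bnd[OF xR] by (simp add: sh_def)
      from less.hyps[OF this shx] obtain c where c: "c \<in> L" "snd c = snd (sh x)" "fst (sh x) \<le> fst c"
        "\<forall>z. snd z = snd (sh x) \<and> fst (sh x) \<le> fst z \<and> fst z < fst c \<longrightarrow> z \<in> R" by blast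
      show ?thesis
      proof (intro bexI[of _ c] conjI allI impI)
        show "snd c = snd x" "fst x \<le> fst c" using c by (auto simp: sh_def)
        fix z assume z: "snd z = snd x \<and> fst x \<le> fst z \<and> fst z < fst c"
        show "z \<in> R"
        proof (cases "fst z = fst x")
          case True then have "z = x" using z by (simp add: prod_eq_iff)
          then show ?thesis using xR by simp
        next
          case False
          then have "snd z = snd (sh x) \<and> fst (sh x) \<le> fst z \<and> fst z < fst c" using z by (auto simp: sh_def)
          then show ?thesis using c(4) by blast
        qed
      qed (use c in auto)
    qed
  qed
qed

lemma V4:
  assumes fL: "finite L" and RL: "R \<subseteq> - L" and fR: "finite R" and sub: "sh ` R \<subseteq> L \<union> R"
  shows "good L (hk_diag L R)"
  unfolding good_def
proof
  fix u assume u: "u \<in> hk_diag L R"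
  have nsh: "u \<notin> sh ` R" and uLR: "u \<in> L \<union> R" using u unfolding hk_diag_eq by blast+
  have NS: "N (hk_diag L R) u = N L u" using V3[OF fL RL fR sub, of u] nsh by simp
  obtain c where c: "c \<in> L" "snd c = snd u" "fst u \<le> fst c"
    "\<forall>z. snd z = snd u \<and> fst u \<le> fst z \<and> fst z < fst c \<longrightarrow> z \<in> R"
    using CH[OF RL fR sub uLR] by blast
  have "{z \<in> L. lt z c} = {z \<in> L. lt z u}"
  proof
    show "{z \<in> L. lt z u} \<subseteq> {z \<in> L. lt z c}"
    proof
      fix z assume "z \<in> {z \<in> L. lt z u}"
      then have "z \<in> L" "lt z u" by simp_all
      moreover have "lt z c" using \<open>lt z u\<close> c(2,3) unfolding lt_def by linarith
      ultimately show "z \<in> {z \<in> L. lt z c}" by simp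
    qed
    show "{z \<in> L. lt z c} \<subseteq> {z \<in> L. lt z u}"
    proof
      fix z assume z: "z \<in> {z \<in> L. lt z c}"
      then have zL: "z \<in> L" and zc: "lt z c" by simp_all
      show "z \<in> {z \<in> L. lt z u}"
      proof (rule ccontr)
        assume "z \<notin> {z \<in> L. lt z u}"
        then have "\<not> lt z u" using zL by simp
        then have "le u z" by (simp add: not_lt)
        then have "lt u z \<or> u = z" by (simp add: le_def)
        then have "snd z = snd u \<and> fst u \<le> fst z \<and> fst z < fst c"
        proof
          assume "lt u z" then show ?thesis using zc c(2) unfolding lt_def by presburger
        next
          assume "u = z" then show ?thesis using zc c(2) unfolding lt_def by presburger
        qed
        then have "z \<in> R" using c(4) by blast
        then show False using zL RL by blast
      qed
    qed
  qed
  then have NC: "N L c = N L u" by (simp add: N_def)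
  show "N L u = N (hk_diag L R) u \<and> (\<exists>c\<in>L. N L c = N (hk_diag L R) u \<and> snd c = snd u)"
  proof
    show "N L u = N (hk_diag L R) u" using NS by simp
    show "\<exists>c\<in>L. N L c = N (hk_diag L R) u \<and> snd c = snd u"
      by (rule bexI[of _ c]) (use NC NS c(1,2) in simp_all)
  qed
qed

lemma V5:
  assumes fL: "finite L" and RL: "R \<subseteq> - L" and fR: "finite R" and sub: "sh ` R \<subseteq> L \<union> R"
  shows "R = RS L (hk_diag L R)"
proof -
  have "x \<in> R \<longleftrightarrow> sh x \<in> sh ` R" for x using inj_image_mem_iff[OF inj_sh] by simp
  note mem = this
  have "x \<in> R \<longleftrightarrow> N (hk_diag L R) (sh x) = N L (sh x) + 1" for x
  proof -
    have "N (hk_diag L R) (sh x) = N L (sh x) + (if sh x \<in> sh ` R then 1 else 0)" by (rule V3[OF fL RL fR sub])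
    then show ?thesis using mem[of x] by auto
  qed
  then show ?thesis unfolding RS_def by blast
qed

lemma finite_B: fixes L :: "(nat \<times> nat) set" shows "finite L \<Longrightarrow> finite {x. \<exists>c\<in>L. snd x = snd c \<and> fst x < fst c}"
proof -
  assume fL: "finite L"
  have "{x. \<exists>c\<in>L. snd x = snd c \<and> fst x < fst c} \<subseteq> (\<Union>c\<in>L. {..<fst c} \<times> {snd c})"
    by (auto simp: mem_Times_iff)
  moreover have "finite (\<Union>c\<in>L. {..<fst c} \<times> {snd c})" by (intro finite_UN_I fL finite_cartesian_product) auto
  ultimately show ?thesis by (rule finite_subset)
qed

lemma finite_valid: "finite L \<Longrightarrow> finite (valid_sets L k)"
proof -
  assume fL: "finite L"
  let ?B = "{x. \<exists>c\<in>L. snd x = snd c \<and> fst x < fst c}"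
  have "valid_sets L k \<subseteq> Pow ?B"
  proof
    fix R assume R: "R \<in> valid_sets L k"
    then have RL: "R \<subseteq> - L" and fR: "finite R" and cc: "card (hk_diag L R) = card L"
      by (auto simp: valid_sets_def)
    have sub: "sh ` R \<subseteq> L \<union> R" by (rule V1[OF fL RL fR cc])
    have "R \<subseteq> ?B"
    proof
      fix x assume xR: "x \<in> R"
      obtain c where c: "c \<in> L" "snd c = snd x" "fst x \<le> fst c"
        using CH[OF RL fR sub, of x] xR by blast
      have "x \<noteq> c" using xR c(1) RL by auto
      then have "fst x < fst c" using c by (auto simp: prod_eq_iff)
      then have "\<exists>c\<in>L. snd x = snd c \<and> fst x < fst c" using c by (intro bexI[of _ c]) auto
      then show "x \<in> ?B" by simp
    qed
    then show "R \<in> Pow ?B" by simp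
  qed
  moreover have "finite (Pow ?B)" using finite_B[OF fL] by simp
  ultimately show ?thesis by (rule finite_subset)
qed


lemma N_eqI:
  assumes fS: "finite S" and s: "s \<le> card S" and h: "\<And>t. t < card S \<Longrightarrow> lt (cells S ! t) y \<longleftrightarrow> t < s"
  shows "N S y = s"
proof (cases "N S y" s rule: linorder_cases)
  case less
  then have "N S y < card S" using s by simp
  then show ?thesis using h[of "N S y"] N_iff[OF fS \<open>N S y < card S\<close>, of y] less by simp
next
  case greater
  then have "s < card S" using N_le[OF fS, of y] by simp
  then show ?thesis using h[of s] N_iff[OF fS \<open>s < card S\<close>, of y] greater by simp
qed simp

lemma le_refl'[simp]: "le x x" by (simp add: le_def)
lemma le_not_lt: "le y x \<Longrightarrow> \<not> lt x y" by (simp add: not_lt)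

lemma row_lemma:
  assumes "lt a y" "le y c" "snd c = snd a"
  shows "snd y = snd a \<and> fst a < fst y \<and> fst y \<le> fst c"
proof -
  from assms(2) have "lt y c \<or> y = c" by (simp add: le_def)
  then show ?thesis
  proof
    assume "lt y c" then show ?thesis using assms(1,3) unfolding lt_def by presburger
  next
    assume "y = c" then show ?thesis using assms(1,3) unfolding lt_def by presburger
  qed
qed

context
  fixes L S :: "(nat \<times> nat) set"
  assumes fL: "finite L" and fS: "finite S" and cS: "card S = card L" and g: "good L S"
begin

abbreviation "nL \<equiv> card L"
abbreviation "cc t \<equiv> cells L ! t"
abbreviation "dd t \<equiv> cells S ! t"

lemma gc: "s < nL \<Longrightarrow> N L (dd s) = s \<and> snd (cc s) = snd (dd s) \<and> fst (dd s) \<le> fst (cc s)"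
  using good_cells[OF fL fS cS g] by blast

lemma le_dc: "s < nL \<Longrightarrow> le (dd s) (cc s)"
proof -
  assume s: "s < nL"
  show ?thesis
  proof (cases "dd s = cc s")
    case True then show ?thesis by (simp add: le_def)
  next
    case False
    have "fst (dd s) \<noteq> fst (cc s)"
    proof
      assume "fst (dd s) = fst (cc s)"
      then have "dd s = cc s" using gc[OF s] by (simp add: prod_eq_iff)
      with False show False by simp
    qed
    then have "lt (dd s) (cc s)" using gc[OF s] by (simp add: lt_def)
    then show ?thesis by (simp add: le_def)
  qed
qed

lemma le_c: "s \<le> t \<Longrightarrow> t < nL \<Longrightarrow> le (cc s) (cc t)"
  using cells_lt[of s t L] by (cases "s = t") (auto simp: le_def)

lemma le_d: "s \<le> t \<Longrightarrow> t < nL \<Longrightarrow> le (dd s) (dd t)"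
  using cells_lt[of s t S] cS by (cases "s = t") (auto simp: le_def)

lemma Fchar: "N S y = N L y + 1 \<longleftrightarrow> (\<exists>s<nL. lt (dd s) y \<and> le y (cc s))"
proof
  assume h: "N S y = N L y + 1"
  define s where "s = N L y"
  have "s + 1 \<le> nL" using N_le[OF fS, of y] h cS by (simp add: s_def)
  then have s: "s < nL" by simp
  have "lt (dd s) y" using N_iff[OF fS, of s y] s h cS by (simp add: s_def)
  moreover have "\<not> lt (cc s) y" using N_iff[OF fL s, of y] by (simp add: s_def)
  then have "le y (cc s)" by (simp add: not_lt)
  ultimately show "\<exists>s<nL. lt (dd s) y \<and> le y (cc s)" using s by blast
next
  assume "\<exists>s<nL. lt (dd s) y \<and> le y (cc s)"
  then obtain s where s: "s < nL" "lt (dd s) y" "le y (cc s)" by blast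
  have NL: "N L y = s"
  proof (rule N_eqI[OF fL])
    show "s \<le> nL" using s by simp
    fix t assume t: "t < nL"
    show "lt (cc t) y \<longleftrightarrow> t < s"
    proof
      assume "lt (cc t) y"
      show "t < s"
      proof (rule ccontr)
        assume "\<not> t < s"
        then have "le (cc s) (cc t)" using le_c t by simp
        then have "le y (cc t)" using s(3) le_trans' by blast
        with \<open>lt (cc t) y\<close> show False using le_not_lt by blast
      qed
    next
      assume "t < s"
      then have "lt (cc t) (dd s)" using N_iff[OF fL t, of "dd s"] gc[OF s(1)] by simp
      then show "lt (cc t) y" using s(2) lt_trans by blast
    qed
  qed
  have NS: "N S y = s + 1"
  proof (rule N_eqI[OF fS])
    show "s + 1 \<le> card S" using s cS by simp
    fix t assume t: "t < card S"
    show "lt (dd t) y \<longleftrightarrow> t < s + 1"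
    proof
      assume "lt (dd t) y"
      show "t < s + 1"
      proof (rule ccontr)
        assume "\<not> t < s + 1"
        then have "s < t" by simp
        then have "lt (cc s) (dd t)" using N_iff[OF fL s(1), of "dd t"] gc[of t] t cS by simp
        then have "lt y (dd t)" using s(3) le_lt_trans by blast
        with \<open>lt (dd t) y\<close> show False using lt_asym by blast
      qed
    next
      assume "t < s + 1"
      then have "le (dd t) (dd s)" using le_d s(1) by simp
      then show "lt (dd t) y" using s(2) le_lt_trans by blast
    qed
  qed
  show "N S y = N L y + 1" using NL NS by simp
qed

lemma Fwit: "N S y = N L y + 1 \<Longrightarrow> \<exists>s<nL. lt (dd s) y \<and> le y (cc s) \<and> snd y = snd (dd s) \<and> fst (dd s) < fst y \<and> fst y \<le> fst (cc s)"
proof -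
  assume "N S y = N L y + 1"
  then obtain s where s: "s < nL" "lt (dd s) y" "le y (cc s)" using Fchar by blast
  have "snd y = snd (dd s) \<and> fst (dd s) < fst y \<and> fst y \<le> fst (cc s)"
    by (rule row_lemma[OF s(2,3)]) (use gc[OF s(1)] in simp)
  then show ?thesis using s by blast
qed

lemma sh_RS: "sh ` RS L S = {y. N S y = N L y + 1}"
proof
  show "sh ` RS L S \<subseteq> {y. N S y = N L y + 1}" unfolding RS_def by blast
  show "{y. N S y = N L y + 1} \<subseteq> sh ` RS L S"
  proof
    fix y assume "y \<in> {y. N S y = N L y + 1}"
    then have F: "N S y = N L y + 1" by simp
    obtain s where "fst (dd s) < fst y" using Fwit[OF F] by blast
    then have y: "sh (fst y - 1, snd y) = y" by (simp add: sh_def prod_eq_iff)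
    have "(fst y - 1, snd y) \<in> RS L S" unfolding RS_def mem_Collect_eq y by (rule F)
    then have "sh (fst y - 1, snd y) \<in> sh ` RS L S" by (rule imageI)
    then show "y \<in> sh ` RS L S" unfolding y .
  qed
qed

lemma G_hk: "hk_diag L (RS L S) = S"
proof -
  have e: "hk_diag L (RS L S) = (L \<union> RS L S) - {y. N S y = N L y + 1}"
    unfolding hk_diag_eq sh_RS ..
  show ?thesis unfolding e
  proof (rule Set.set_eqI)
    fix x
    show "x \<in> (L \<union> RS L S) - {y. N S y = N L y + 1} \<longleftrightarrow> x \<in> S"
    proof
      assume x: "x \<in> S"
      obtain s where s: "s < nL" "dd s = x" using cells_ex[OF fS x] cS by auto
      have NS: "N S (dd s) = s" using N_cells[OF fS] s(1) cS by simp
      have "N S x = N L x" using NS gc[OF s(1)] s(2) by simp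
      then have nF: "x \<notin> {y. N S y = N L y + 1}" by simp
      have "x \<in> L \<union> RS L S"
      proof (cases "dd s = cc s")
        case True then show ?thesis using cells_in[OF fL s(1)] s(2) by simp
      next
        case False
        then have lt: "fst (dd s) < fst (cc s)" using gc[OF s(1)] by (auto simp: prod_eq_iff)
        have "le (sh (dd s)) (cc s)"
        proof (cases "fst (dd s) + 1 = fst (cc s)")
          case True then have "sh (dd s) = cc s" using gc[OF s(1)] by (simp add: sh_def prod_eq_iff)
          then show ?thesis by simp
        next
          case False then show ?thesis using lt gc[OF s(1)] by (simp add: le_def lt_def sh_def)
        qed
        then have "N S (sh (dd s)) = N L (sh (dd s)) + 1" using Fchar s(1) lt_sh by blast
        then show ?thesis using s(2) unfolding RS_def by blast
      qed
      then show "x \<in> (L \<union> RS L S) - {y. N S y = N L y + 1}" using nF by blast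
    next
      assume x: "x \<in> (L \<union> RS L S) - {y. N S y = N L y + 1}"
      then have nF: "\<not> (N S x = N L x + 1)" and xLR: "x \<in> L \<or> x \<in> RS L S" by auto
      show "x \<in> S"
      proof (rule ccontr)
        assume xS: "x \<notin> S"
        from xLR show False
        proof
          assume xL: "x \<in> L"
          obtain t where t: "t < nL" "cc t = x" using cells_ex[OF fL xL] by auto
          have "dd t \<in> S" using cells_in[OF fS] t(1) cS by simp
          then have ne: "dd t \<noteq> cc t" using xS t(2) by auto
          have "lt (dd t) (cc t)" using le_dc[OF t(1)] ne by (simp add: le_def)
          then have "lt (dd t) x" using t(2) by simp
          moreover have "le x (cc t)" using t(2) by simp
          ultimately have "N S x = N L x + 1" using Fchar t(1) by blast
          then show False using nF by simp
        next
          assume xR: "x \<in> RS L S"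
          then have "N S (sh x) = N L (sh x) + 1" unfolding RS_def by simp
          then obtain s where s: "s < nL" "lt (dd s) (sh x)" "le (sh x) (cc s)" using Fchar by blast
          have "le (dd s) x" using lt_to_sh[OF s(2)] .
          moreover have "dd s \<noteq> x" using cells_in[OF fS] s(1) cS xS by auto
          ultimately have "lt (dd s) x" by (simp add: le_def)
          moreover have "le x (cc s)" using lt_le_trans[OF lt_sh[of x] s(3)] by (simp add: le_def)
          ultimately have "N S x = N L x + 1" using Fchar s(1) by blast
          then show False using nF by simp
        qed
      qed
    qed
  qed
qed

lemma G_disj: "RS L S \<subseteq> - L"
proof
  fix x assume xR: "x \<in> RS L S"
  show "x \<in> - L"
  proof
    assume xL: "x \<in> L"
    obtain t where t: "t < nL" "cc t = x" using cells_ex[OF fL xL] by auto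
    have "N S (sh x) = N L (sh x) + 1" using xR unfolding RS_def by simp
    then obtain s where s: "s < nL" "lt (dd s) (sh x)" "le (sh x) (cc s)" using Fchar by blast
    have "lt (cc t) (cc s)" using lt_sh[of x] s(3) t(2) lt_le_trans by blast
    then have "t < s" using cells_lt_iff[OF t(1) s(1)] by simp
    then have "lt (cc t) (dd s)" using N_iff[OF fL t(1), of "dd s"] gc[OF s(1)] by simp
    moreover have "le (dd s) (cc t)" using lt_to_sh[OF s(2)] t(2) by simp
    ultimately show False using lt_le_trans[of "cc t" "dd s" "cc t"] by simp
  qed
qed

lemma G_fin: "finite (RS L S)"
proof -
  have "RS L S \<subseteq> {x. \<exists>c\<in>L. snd x = snd c \<and> fst x < fst c}"
  proof
    fix x assume "x \<in> RS L S"
    then have "N S (sh x) = N L (sh x) + 1" unfolding RS_def by simp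
    then obtain s where s: "s < nL" "snd (sh x) = snd (dd s)" "fst (sh x) \<le> fst (cc s)" using Fwit by blast
    have "cc s \<in> L" using cells_in[OF fL s(1)] .
    moreover have "snd x = snd (cc s) \<and> fst x < fst (cc s)" using s gc[OF s(1)] by (simp add: sh_def)
    ultimately show "x \<in> {x. \<exists>c\<in>L. snd x = snd c \<and> fst x < fst c}" by blast
  qed
  then show ?thesis using finite_B[OF fL] by (rule finite_subset)
qed

end


lemma K2:
  assumes fL: "finite L" and fS: "finite S" and cS: "card S = card L"
  shows "{R \<in> valid_sets L k. hk_diag L R = S} =
    (if good L S \<and> sum fst L = sum fst S + k then {RS L S} else {})"
proof -
  have A: "good L S \<and> sum fst L = sum fst S + k \<and> R = RS L S"
    if R: "R \<in> valid_sets L k" and h: "hk_diag L R = S" for R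
  proof -
    have RL: "R \<subseteq> - L" and fR: "finite R" and ck: "card R = k" and cc: "card (hk_diag L R) = card L"
      using R by (auto simp: valid_sets_def)
    have sub: "sh ` R \<subseteq> L \<union> R" by (rule V1[OF fL RL fR cc])
    have "good L (hk_diag L R)" by (rule V4[OF fL RL fR sub])
    moreover have "sum fst (hk_diag L R) + card R = sum fst L" by (rule V2[OF fL RL fR sub])
    moreover have "R = RS L (hk_diag L R)" by (rule V5[OF fL RL fR sub])
    ultimately show ?thesis using h ck by simp
  qed
  have B: "RS L S \<in> valid_sets L k \<and> hk_diag L (RS L S) = S"
    if g: "good L S" and dg: "sum fst L = sum fst S + k"
  proof -
    have hk: "hk_diag L (RS L S) = S" by (rule G_hk[OF fL fS cS g])
    have RL: "RS L S \<subseteq> - L" by (rule G_disj[OF fL fS cS g])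
    have fR: "finite (RS L S)" by (rule G_fin[OF fL fS cS g])
    have cc: "card (hk_diag L (RS L S)) = card L" using hk cS by simp
    have sub: "sh ` RS L S \<subseteq> L \<union> RS L S" by (rule V1[OF fL RL fR cc])
    have "sum fst (hk_diag L (RS L S)) + card (RS L S) = sum fst L" by (rule V2[OF fL RL fR sub])
    then have "card (RS L S) = k" using hk dg by simp
    then show ?thesis using hk RL fR fS cS unfolding valid_sets_def by simp
  qed
  show ?thesis
  proof (cases "good L S \<and> sum fst L = sum fst S + k")
    case True
    then show ?thesis using A B by auto
  next
    case False
    then show ?thesis using A by auto
  qed
qed

lemma prod_cells: "finite S \<Longrightarrow> prod f S = (\<Prod>s<card S. f (cells S ! s))"
proof -
  assume fS: "finite S"
  have e: "S = (\<lambda>s. cells S ! s) ` {..<card S}"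
  proof
    show "S \<subseteq> (\<lambda>s. cells S ! s) ` {..<card S}"
    proof
      fix x assume "x \<in> S"
      then obtain i where "i < card S" "cells S ! i = x" using cells_ex[OF fS] by blast
      then show "x \<in> (\<lambda>s. cells S ! s) ` {..<card S}" by force
    qed
    show "(\<lambda>s. cells S ! s) ` {..<card S} \<subseteq> S" using cells_in[OF fS] by auto
  qed
  have "inj_on (\<lambda>s. cells S ! s) {..<card S}" using cells_inj[of _ S] by (auto simp: inj_on_def)
  then have "prod f ((\<lambda>s. cells S ! s) ` {..<card S}) = (\<Prod>s<card S. f (cells S ! s))"
    by (simp add: prod.reindex)
  then show ?thesis using e by simp
qed

lemma K3:
  assumes fL: "finite L" and fS: "finite S" and cS: "card S = card L" and g: "good L S"
  shows "(\<Prod>x\<in>S. fact (fst x) * fact (snd x) :: nat) dvd (\<Prod>x\<in>L. fact (fst x) * fact (snd x))"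
    and "(\<Prod>x\<in>S. fact (snd x) :: nat) = (\<Prod>x\<in>L. fact (snd x))"
proof -
  note gc = good_cells[OF fL fS cS g]
  show "(\<Prod>x\<in>S. fact (fst x) * fact (snd x) :: nat) dvd (\<Prod>x\<in>L. fact (fst x) * fact (snd x))"
    unfolding prod_cells[OF fS] prod_cells[OF fL] cS
  proof (rule prod_dvd_prod)
    fix s assume "s \<in> {..<card L}"
    then have "snd (cells L ! s) = snd (cells S ! s)" "fst (cells S ! s) \<le> fst (cells L ! s)" using gc by auto
    then show "fact (fst (cells S ! s)) * fact (snd (cells S ! s)) dvd (fact (fst (cells L ! s)) * fact (snd (cells L ! s)) :: nat)"
      by (simp add: fact_dvd)
  qed
  show "(\<Prod>x\<in>S. fact (snd x) :: nat) = (\<Prod>x\<in>L. fact (snd x))"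
    unfolding prod_cells[OF fS] prod_cells[OF fL] cS
    by (rule prod.cong) (use gc in auto)
qed

lemma valid_good:
  assumes fL: "finite L" and R: "R \<in> valid_sets L k"
  shows "good L (hk_diag L R) \<and> finite (hk_diag L R) \<and> card (hk_diag L R) = card L"
proof -
  have RL: "R \<subseteq> - L" and fR: "finite R" and cc: "card (hk_diag L R) = card L" and fh: "finite (hk_diag L R)"
    using R by (auto simp: valid_sets_def)
  have sub: "sh ` R \<subseteq> L \<union> R" by (rule V1[OF fL RL fR cc])
  show ?thesis using V4[OF fL RL fR sub] cc fh by simp
qed

lemma eps_nat:
  assumes fL: "finite L" and fS: "finite S" and cS: "card S = card L" and g: "good L S"
  shows "epsilon L S \<in> \<nat> \<and> epsilon L S > 0"
proof -
  let ?A = "\<Prod>(p, q)\<in>L. fact p * fact q :: nat" and ?B = "\<Prod>(p, q)\<in>S. fact p * fact q :: nat"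
  have A: "?A = (\<Prod>x\<in>L. fact (fst x) * fact (snd x))" by (simp add: case_prod_beta)
  have B: "?B = (\<Prod>x\<in>S. fact (fst x) * fact (snd x))" by (simp add: case_prod_beta)
  have "?B dvd ?A" unfolding A B by (rule K3(1)[OF fL fS cS g])
  then obtain m where m: "?A = ?B * m" by (auto simp: dvd_def)
  have Bpos: "?B > 0" by (rule prod_pos) auto
  have Apos: "?A > 0" by (rule prod_pos) auto
  have nz: "(of_nat ?B :: rat) \<noteq> 0" using Bpos by (simp only: of_nat_eq_0_iff neq0_conv)
  have "epsilon L S = of_nat ?A / of_nat ?B" by (simp only: epsilon_def)
  also have "\<dots> = of_nat (?B * m) / of_nat ?B" by (simp only: m)
  also have "\<dots> = of_nat m" by (simp only: of_nat_mult nonzero_mult_div_cancel_left[OF nz])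
  finally have "epsilon L S = of_nat m" .
  moreover have "m > 0" using Apos m by (simp add: gr0I)
  ultimately show ?thesis by simp
qed


definition PM :: "(nat \<times> nat) set \<Rightarrow> (nat \<Rightarrow> nat) \<Rightarrow> (nat \<Rightarrow> nat) \<Rightarrow> rat mat" where
  "PM S a b = mat (card S) (card S) (\<lambda>(i, s). if cells S ! s = (a i, b i) then 1 else 0)"

lemma lookup_constmul: "Poly_Mapping.lookup (const_poly c * P) e = c * Poly_Mapping.lookup P e"
  unfolding const_poly_def mult_map_scale_conv_mult[symmetric] by (simp add: map.rep_eq when_def)

lemma det_zerorow:
  assumes i: "i < n" and z: "\<And>t. t < n \<Longrightarrow> f (i, t) = (0::'a::comm_ring_1)"
  shows "det (mat n n f) = 0"
proof -
  have "det (mat n n f) = (\<Sum>\<sigma>\<in>{\<sigma>. \<sigma> permutes {0..<n}}. signof \<sigma> * (\<Prod>j = 0..<n. mat n n f $$ (j, \<sigma> j)))"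
    by (rule det_def') simp
  also have "\<dots> = 0"
  proof (rule sum.neutral, rule ballI)
    fix \<sigma> assume "\<sigma> \<in> {\<sigma>. \<sigma> permutes {0..<n}}"
    then have "\<sigma> i < n" using permutes_in_image[of \<sigma> "{0..<n}" i] i by auto
    then have "mat n n f $$ (i, \<sigma> i) = 0" using i z by simp
    then have "(\<Prod>j = 0..<n. mat n n f $$ (j, \<sigma> j)) = 0" using i by (intro prod_zero) auto
    then show "signof \<sigma> * (\<Prod>j = 0..<n. mat n n f $$ (j, \<sigma> j)) = 0" by simp
  qed
  finally show ?thesis .
qed

lemma det_eqrows:
  assumes i: "i < n" and j: "j < n" and ij: "i \<noteq> j" and e: "\<And>t. t < n \<Longrightarrow> f (i, t) = (f (j, t) :: 'a::comm_ring_1)"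
  shows "det (mat n n f) = 0"
proof -
  have "row (mat n n f) i = row (mat n n f) j" using i j e by (auto simp: row_mat)
  then show ?thesis by (rule det_identical_rows[OF _ ij i j, rotated]) simp
qed

lemma Delta_coeff:
  "Poly_Mapping.lookup (Delta S) (ex (card S) a b) = det (PM S a b)"
proof -
  let ?n = "card S"
  have "Poly_Mapping.lookup (Delta S) (ex ?n a b) = (\<Sum>\<sigma>\<in>perms ?n.
     if \<forall>i<?n. fst (cells S ! \<sigma> i) = a i \<and> snd (cells S ! \<sigma> i) = b i then of_int (sign \<sigma>) else 0)"
    unfolding Delta_sum lookup_sum lookup_single when_def ex_eq_iff by simp
  also have "\<dots> = det (PM S a b)"
  proof -
    have d: "det (PM S a b) = (\<Sum>\<sigma>\<in>perms ?n. of_int (sign \<sigma>) * (\<Prod>i = 0..<?n. PM S a b $$ (i, \<sigma> i)))"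
      unfolding perms_def by (rule det_def') (simp add: PM_def)
    show ?thesis unfolding d
    proof (rule sum.cong[OF refl])
      fix \<sigma> assume s: "\<sigma> \<in> perms ?n"
      have pe: "PM S a b $$ (i, \<sigma> i) = (if cells S ! \<sigma> i = (a i, b i) then 1 else 0)" if "i < ?n" for i
        using that perms_lt[OF s that] by (simp add: PM_def)
      show "(if \<forall>i<?n. fst (cells S ! \<sigma> i) = a i \<and> snd (cells S ! \<sigma> i) = b i then of_int (sign \<sigma>) else 0) =
        of_int (sign \<sigma>) * (\<Prod>i = 0..<?n. PM S a b $$ (i, \<sigma> i))"
      proof (cases "\<forall>i<?n. fst (cells S ! \<sigma> i) = a i \<and> snd (cells S ! \<sigma> i) = b i")
        case True
        have "(\<Prod>i = 0..<?n. PM S a b $$ (i, \<sigma> i)) = 1"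
          using True by (intro prod.neutral) (auto simp: pe prod_eq_iff)
        then show ?thesis using True by simp
      next
        case False
        then obtain i where i: "i < ?n" "\<not> (fst (cells S ! \<sigma> i) = a i \<and> snd (cells S ! \<sigma> i) = b i)" by blast
        have "(\<Prod>i = 0..<?n. PM S a b $$ (i, \<sigma> i)) = 0"
          using i by (intro prod_zero) (auto simp: pe prod_eq_iff intro!: bexI[of _ i])
        then show ?thesis unfolding if_not_P[OF False] by simp
      qed
    qed
  qed
  finally show ?thesis .
qed

lemma Delta_nonex:
  assumes "e \<noteq> ex (card S) (\<lambda>i. Poly_Mapping.lookup e (Inl i)) (\<lambda>i. Poly_Mapping.lookup e (Inr i))"
  shows "Poly_Mapping.lookup (Delta S) e = 0"
  unfolding Delta_sum lookup_sum lookup_single when_def using ex_not[OF assms] by simp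

lemma hk_nonex:
  assumes "e \<noteq> ex (card L) (\<lambda>i. Poly_Mapping.lookup e (Inl i)) (\<lambda>i. Poly_Mapping.lookup e (Inr i))"
  shows "Poly_Mapping.lookup (hk_diff (card L) k (Delta L)) e = 0"
  unfolding hk_Delta lookup_sum lookup_single when_def using ex_not[OF assms] by simp

lemma sum_cells: "finite S \<Longrightarrow> sum f S = (\<Sum>s<card S. f (cells S ! s))"
proof -
  assume fS: "finite S"
  have e: "S = (\<lambda>s. cells S ! s) ` {..<card S}"
  proof
    show "S \<subseteq> (\<lambda>s. cells S ! s) ` {..<card S}"
    proof
      fix x assume "x \<in> S"
      then obtain i where "i < card S" "cells S ! i = x" using cells_ex[OF fS] by blast
      then show "x \<in> (\<lambda>s. cells S ! s) ` {..<card S}" by force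
    qed
    show "(\<lambda>s. cells S ! s) ` {..<card S} \<subseteq> S" using cells_in[OF fS] by auto
  qed
  have "inj_on (\<lambda>s. cells S ! s) {..<card S}" using cells_inj[of _ S] by (auto simp: inj_on_def)
  then have "sum f ((\<lambda>s. cells S ! s) ` {..<card S}) = (\<Sum>s<card S. f (cells S ! s))"
    by (simp add: sum.reindex)
  then show ?thesis using e by simp
qed


lemma BM_factor:
  assumes fL: "finite L" and inj: "inj_on (\<lambda>i. (a i, b i)) {..<card L}"
  defines "S0 \<equiv> (\<lambda>i. (a i, b i)) ` {..<card L}"
  shows "BM L a b = PM S0 a b * AM L S0"
proof -
  let ?n = "card L"
  have fS0: "finite S0" by (simp add: S0_def)
  have cS0: "card S0 = ?n" unfolding S0_def using inj by (simp add: card_image)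
  show ?thesis
  proof (rule eq_matI)
    show "dim_row (BM L a b) = dim_row (PM S0 a b * AM L S0)" by (simp add: BM_def PM_def cS0)
    show "dim_col (BM L a b) = dim_col (PM S0 a b * AM L S0)" by (simp add: BM_def AM_def)
    fix i t assume i: "i < dim_row (PM S0 a b * AM L S0)" and t: "t < dim_col (PM S0 a b * AM L S0)"
    then have i': "i < ?n" and t': "t < ?n" by (simp_all add: PM_def AM_def cS0)
    have "(a i, b i) \<in> S0" using i' by (simp add: S0_def)
    then obtain si where si: "si < ?n" "cells S0 ! si = (a i, b i)" using cells_ex[OF fS0] cS0 by auto
    have "(PM S0 a b * AM L S0) $$ (i, t) = (\<Sum>s = 0..<?n. PM S0 a b $$ (i, s) * AM L S0 $$ (s, t))"
      using i' t' by (simp add: PM_def AM_def cS0 scalar_prod_def)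
    also have "\<dots> = (\<Sum>s = 0..<?n. if s = si then AM L S0 $$ (si, t) else 0)"
    proof (rule sum.cong[OF refl])
      fix s assume s: "s \<in> {0..<?n}"
      have "cells S0 ! s = (a i, b i) \<longleftrightarrow> s = si" using cells_inj[of s S0 si] s si cS0 by auto
      then show "PM S0 a b $$ (i, s) * AM L S0 $$ (s, t) = (if s = si then AM L S0 $$ (si, t) else 0)"
        using s i' by (auto simp: PM_def cS0)
    qed
    also have "\<dots> = AM L S0 $$ (si, t)" using si by simp
    also have "\<dots> = BM L a b $$ (i, t)" using si i' t' by (simp add: AM_def BM_def)
    finally show "BM L a b $$ (i, t) = (PM S0 a b * AM L S0) $$ (i, t)" by simp
  qed
qed

lemma coeff_eq:
  fixes L :: "(nat \<times> nat) set" and a b :: "nat \<Rightarrow> nat" and k :: nat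
  assumes fL: "finite L"
  shows "(if (\<Sum>t<card L. fst (cells L ! t)) = (\<Sum>i<card L. a i) + k
     then (\<Prod>t<card L. fact (fst (cells L ! t))) / (\<Prod>i<card L. fact (a i)) * det (BM L a b) else 0)
   = (\<Sum>R\<in>valid_sets L k. epsilon L (hk_diag L R) * det (PM (hk_diag L R) a b))"
proof -
  let ?n = "card L" and ?V = "valid_sets L k" and ?h = "hk_diag L"
  have vg: "good L (?h R) \<and> finite (?h R) \<and> card (?h R) = ?n" if "R \<in> ?V" for R
    using valid_good[OF fL that] .
  show ?thesis
  proof (cases "inj_on (\<lambda>i. (a i, b i)) {..<?n}")
    case False
    then obtain i j where ij: "i < ?n" "j < ?n" "i \<noteq> j" "a i = a j" "b i = b j"
      unfolding inj_on_def by auto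
    have "det (BM L a b) = 0" unfolding BM_def by (rule det_eqrows[OF ij(1,2,3)]) (use ij in simp)
    moreover have "det (PM (?h R) a b) = 0" if R: "R \<in> ?V" for R
      unfolding PM_def by (rule det_eqrows[of i _ j]) (use ij vg[OF R] in simp_all)
    ultimately show ?thesis by simp
  next
    case True
    define S0 where "S0 = (\<lambda>i. (a i, b i)) ` {..<?n}"
    have fS0: "finite S0" by (simp add: S0_def)
    have cS0: "card S0 = ?n" unfolding S0_def using True by (simp add: card_image)
    have PM0: "det (PM (?h R) a b) = 0" if R: "R \<in> ?V" and ne: "?h R \<noteq> S0" for R
    proof -
      have fh: "finite (?h R)" and ch: "card (?h R) = ?n" using vg[OF R] by auto
      have "\<not> S0 \<subseteq> ?h R"
      proof
        assume "S0 \<subseteq> ?h R"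
        then have "S0 = ?h R" using card_subset_eq[OF fh] cS0 ch by simp
        with ne show False by simp
      qed
      then obtain i where i: "i < ?n" "(a i, b i) \<notin> ?h R" unfolding S0_def by auto
      show ?thesis unfolding PM_def ch
      proof (rule det_zerorow[OF i(1)])
        fix t assume t: "t < ?n"
        have "cells (?h R) ! t \<in> ?h R" using cells_in[OF fh] t ch by simp
        then show "(case (i, t) of (i, s) \<Rightarrow> if cells (?h R) ! s = (a i, b i) then 1 else 0) = (0::rat)"
          using i(2) by auto
      qed
    qed
    have fV: "finite ?V" by (rule finite_valid[OF fL])
    have "(\<Sum>R\<in>?V. epsilon L (?h R) * det (PM (?h R) a b))
        = (\<Sum>R\<in>?V. if ?h R = S0 then epsilon L S0 * det (PM S0 a b) else 0)"
      by (rule sum.cong[OF refl]) (use PM0 in auto)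
    also have "\<dots> = (\<Sum>R\<in>{R \<in> ?V. ?h R = S0}. epsilon L S0 * det (PM S0 a b))"
      by (rule sum.inter_filter[OF fV, symmetric])
    also have "\<dots> = of_nat (card {R \<in> ?V. ?h R = S0}) * (epsilon L S0 * det (PM S0 a b))"
      by simp
    also have "{R \<in> ?V. ?h R = S0} = (if good L S0 \<and> sum fst L = sum fst S0 + k then {RS L S0} else {})"
      by (rule K2[OF fL fS0 cS0])
    finally have RHS: "(\<Sum>R\<in>?V. epsilon L (?h R) * det (PM (?h R) a b)) =
       (if good L S0 \<and> sum fst L = sum fst S0 + k then epsilon L S0 * det (PM S0 a b) else 0)" by simp
    have sL: "sum fst L = (\<Sum>t<?n. fst (cells L ! t))" by (rule sum_cells[OF fL])
    have sS: "sum fst S0 = (\<Sum>i<?n. a i)" unfolding S0_def using True by (simp add: sum.reindex)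
    have detB: "det (BM L a b) = det (PM S0 a b) * (if good L S0 then 1 else 0)"
    proof -
      have "det (BM L a b) = det (PM S0 a b * AM L S0)" unfolding S0_def by (rule arg_cong[OF BM_factor[OF fL True]])
      also have "\<dots> = det (PM S0 a b) * det (AM L S0)"
        by (rule det_mult[of _ ?n]) (simp_all add: PM_def AM_def cS0)
      also have "det (AM L S0) = (if good L S0 then 1 else 0)" by (rule det_AM[OF fL fS0 cS0])
      finally show ?thesis .
    qed
    show ?thesis
    proof (cases "good L S0 \<and> sum fst L = sum fst S0 + k")
      case False
      then show ?thesis unfolding RHS detB sL sS by auto
    next
      case gd: True
      then have g: "good L S0" and dg: "(\<Sum>t<?n. fst (cells L ! t)) = (\<Sum>i<?n. a i) + k" using sL sS by auto
      have K: "(\<Prod>t<?n. fact (fst (cells L ! t))) / (\<Prod>i<?n. fact (a i)) = (epsilon L S0 :: rat)"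
      proof -
        let ?PL = "\<Prod>x\<in>L. fact (fst x) :: nat" and ?PS = "\<Prod>x\<in>S0. fact (fst x) :: nat"
        let ?QL = "\<Prod>x\<in>L. fact (snd x) :: nat" and ?QS = "\<Prod>x\<in>S0. fact (snd x) :: nat"
        have Q: "?QS = ?QL" by (rule K3(2)[OF fL fS0 cS0 g])
        have e1: "(\<Prod>(p, q)\<in>L. fact p * fact q) = ?PL * ?QL" by (simp add: case_prod_beta prod.distrib)
        have e2: "(\<Prod>(p, q)\<in>S0. fact p * fact q) = ?PS * ?QS" by (simp add: case_prod_beta prod.distrib)
        have pl: "?PL = (\<Prod>t<?n. fact (fst (cells L ! t)))" by (rule prod_cells[OF fL])
        have ps: "?PS = (\<Prod>i<?n. fact (a i))" unfolding S0_def using True by (simp add: prod.reindex)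
        have "?QL > 0" by (rule prod_pos) simp
        then have Qpos: "(of_nat ?QL :: rat) \<noteq> 0" by (simp only: of_nat_eq_0_iff neq0_conv)
        have "epsilon L S0 = of_nat (?PL * ?QL) / of_nat (?PS * ?QL)" unfolding epsilon_def e1 e2 Q ..
        also have "\<dots> = of_nat ?PL / of_nat ?PS" using Qpos by (simp only: of_nat_mult) simp
        also have "\<dots> = (\<Prod>t<?n. fact (fst (cells L ! t))) / (\<Prod>i<?n. fact (a i))"
          unfolding pl ps by (simp add: of_nat_prod)
        finally show ?thesis by simp
      qed
      show ?thesis unfolding RHS detB using gd dg K by simp
    qed
  qed
qed

theorem mainTheorem3:
  fixes L :: "(nat \<times> nat) set" and k :: nat
  assumes "finite L" and "k \<ge> 1"
  shows "hk_diff (card L) k (Delta L) =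
           (\<Sum>R\<in>valid_sets L k. const_poly (epsilon L (hk_diag L R)) * Delta (hk_diag L R))
       \<and> (\<forall>R\<in>valid_sets L k. epsilon L (hk_diag L R) \<in> \<nat> \<and> epsilon L (hk_diag L R) > 0)"
proof
  note fL = assms(1)
  let ?n = "card L" and ?V = "valid_sets L k" and ?h = "hk_diag L"
  have vg: "good L (?h R) \<and> finite (?h R) \<and> card (?h R) = ?n" if "R \<in> ?V" for R
    using valid_good[OF fL that] .
  show "\<forall>R\<in>?V. epsilon L (?h R) \<in> \<nat> \<and> epsilon L (?h R) > 0"
  proof
    fix R assume R: "R \<in> ?V"
    show "epsilon L (?h R) \<in> \<nat> \<and> epsilon L (?h R) > 0"
      by (rule eps_nat[OF fL]) (use vg[OF R] in auto)
  qed
  show "hk_diff ?n k (Delta L) = (\<Sum>R\<in>?V. const_poly (epsilon L (?h R)) * Delta (?h R))"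
  proof (rule poly_mapping_eqI)
    fix e :: "(nat + nat) \<Rightarrow>\<^sub>0 nat"
    define a where "a = (\<lambda>i. Poly_Mapping.lookup e (Inl i))"
    define b where "b = (\<lambda>i. Poly_Mapping.lookup e (Inr i))"
    have R1: "Poly_Mapping.lookup (\<Sum>R\<in>?V. const_poly (epsilon L (?h R)) * Delta (?h R)) e
        = (\<Sum>R\<in>?V. epsilon L (?h R) * Poly_Mapping.lookup (Delta (?h R)) e)"
      by (simp add: lookup_sum lookup_constmul)
    show "Poly_Mapping.lookup (hk_diff ?n k (Delta L)) e =
          Poly_Mapping.lookup (\<Sum>R\<in>?V. const_poly (epsilon L (?h R)) * Delta (?h R)) e"
    proof (cases "e = ex ?n a b")
      case True
      have "(\<Sum>R\<in>?V. epsilon L (?h R) * Poly_Mapping.lookup (Delta (?h R)) e)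
          = (\<Sum>R\<in>?V. epsilon L (?h R) * det (PM (?h R) a b))"
      proof (rule sum.cong[OF refl])
        fix R assume R: "R \<in> ?V"
        have "e = ex (card (?h R)) a b" using True vg[OF R] by simp
        then show "epsilon L (?h R) * Poly_Mapping.lookup (Delta (?h R)) e = epsilon L (?h R) * det (PM (?h R) a b)"
          using Delta_coeff by simp
      qed
      moreover have "Poly_Mapping.lookup (hk_diff ?n k (Delta L)) e =
        (if (\<Sum>t<?n. fst (cells L ! t)) = (\<Sum>i<?n. a i) + k
         then (\<Prod>t<?n. fact (fst (cells L ! t))) / (\<Prod>i<?n. fact (a i)) * det (BM L a b) else 0)"
        unfolding True by (rule LHS_coeff)
      ultimately show ?thesis unfolding R1 using coeff_eq[OF fL, of a k b] by simp
    next
      case False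
      have "Poly_Mapping.lookup (hk_diff ?n k (Delta L)) e = 0"
        by (rule hk_nonex) (use False in \<open>simp add: a_def b_def\<close>)
      moreover have "(\<Sum>R\<in>?V. epsilon L (?h R) * Poly_Mapping.lookup (Delta (?h R)) e) = 0"
      proof (rule sum.neutral, rule ballI)
        fix R assume R: "R \<in> ?V"
        have "Poly_Mapping.lookup (Delta (?h R)) e = 0"
          by (rule Delta_nonex) (use False vg[OF R] in \<open>simp add: a_def b_def\<close>)
        then show "epsilon L (?h R) * Poly_Mapping.lookup (Delta (?h R)) e = 0" by simp
      qed
      ultimately show ?thesis unfolding R1 by simp
    qed
  qed
qed


end
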